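(* Consider the sharing problem $\min_{\bm x\in\mathbb R^{nN}}\Phi(\bm x):=\frac1N\sum_{i=1}^Nf_i(x_i)+g(\sum_{i=1}^Nx_i)$, where $g:\mathbb R^n\to\mathbb R\cup\{+\infty\}$ is proper, convex and lsc, each $f_i:\mathbb R^n\to\mathbb R$ is differentiable with $L_{f_i}$-Lipschitz gradient, and $\Phi$ is coercive and has the KL property with exponent $\theta\in(0,1)$ (e.g. when $g$ and all $f_i$ are semialgebraic). Then with any essentially cyclic index selection, the sequence $\bm z^k=(s_1^k+\gamma_1w^k,\dots,s_N^k+\gamma_Nw^k)$ produced by the sharing algorithm below converges surely to a point $\bm x^\star$ with $0\in\hat\partial\Phi(\bm x^\star)$; if moreover $\theta\le\frac12$, the convergence is R-linear.
   Context: Sharing algorithm: choose $\bm x^{\mathrm{init}}=(x_1^{\mathrm{init}},\dots,x_N^{\mathrm{init}})$ and $\gamma_i\in(0,N/L_{f_i})$; set $\tilde\gamma=\sum_i\gamma_i$, $s_i=x_i^{\mathrm{init}}-\frac{\gamma_i}N\nabla f_i(x_i^{\mathrm{init}})$, $\tilde s=\sum_is_i$. At iteration $k$ (current values $s_i^k,\tilde s^k$): select $I^{k+1}\subseteq[N]$; set $w^k=\tilde\gamma^{-1}(\operatorname{prox}_{\tilde\gamma g}(\tilde s)-\tilde s)$; for each $i\in I^{k+1}$: $v_i=s_i+\gamma_iw^k-\frac{\gamma_i}N\nabla f_i(s_i+\gamma_iw^k)$, $\tilde s\leftarrow\tilde s+(v_i-s_i)$, $s_i\leftarrow v_i$. $\operatorname{prox}_{tg}(u)=\arg\min_w\{g(w)+\frac1{2t}\|w-u\|^2\}$.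 Essentially cyclic: there exists $T\ge1$ such that every $i$ belongs to at least one of $I^{k+1},\dots,I^{k+T}$ for every $k\ge0$. KL property with exponent $\theta$: for every $\bar w\in\operatorname{dom}\partial\Phi$ there are $\varepsilon,\eta,\varrho>0$ with $\psi'(\Phi(w)-\Phi(\bar w))\operatorname{dist}(0,\partial\Phi(w))\ge1$ whenever $\|w-\bar w\|<\varepsilon$ and $\Phi(\bar w)<\Phi(w)<\Phi(\bar w)+\eta$, $\psi(s)=\varrho s^{1-\theta}$, $\partial$ the limiting subdifferential. $\hat\partial$ is the regular subdifferential. *)

theory Defs
  imports "HOL-Analysis.Analysis"
begin

definition proper_fun :: "('a \<Rightarrow> ereal) \<Rightarrow> bool" where
  "proper_fun g \<longleftrightarrow> (\<forall>x. g x \<noteq> -\<infinity>) \<and> (\<exists>x. g x \<noteq> \<infinity>)"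

definition ereal_convex :: "('a::real_vector \<Rightarrow> ereal) \<Rightarrow> bool" where
  "ereal_convex g \<longleftrightarrow> (\<forall>x y (t::real). 0 < t \<and> t < 1 \<longrightarrow>
      g ((1 - t) *\<^sub>R x + t *\<^sub>R y) \<le> ereal (1 - t) * g x + ereal t * g y)"

text \<open>Lower semicontinuity (sequential form, equivalent in metric spaces).\<close>
definition lsc_fun :: "('a::metric_space \<Rightarrow> ereal) \<Rightarrow> bool" where
  "lsc_fun g \<longleftrightarrow> (\<forall>x X. X \<longlonglongrightarrow> x \<longrightarrow> g x \<le> liminf (\<lambda>k. g (X k)))"

definition prox :: "real \<Rightarrow> ('a::real_normed_vector \<Rightarrow> ereal) \<Rightarrow> 'a \<Rightarrow> 'a" where
  "prox t g u = (SOME w. \<forall>v. g w + ereal ((norm (w - u))\<^sup>2 / (2 * t))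
                             \<le> g v + ereal ((norm (v - u))\<^sup>2 / (2 * t)))"

definition reg_subdiff :: "('a::real_inner \<Rightarrow> ereal) \<Rightarrow> 'a \<Rightarrow> 'a set" where
  "reg_subdiff \<Phi> x = {v. \<bar>\<Phi> x\<bar> \<noteq> \<infinity> \<and>
     (\<forall>\<epsilon>>0. \<exists>\<delta>>0. \<forall>y. norm (y - x) < \<delta> \<longrightarrow>
         \<Phi> y \<ge> \<Phi> x + ereal (inner v (y - x) - \<epsilon> * norm (y - x)))}"

definition lim_subdiff :: "('a::real_inner \<Rightarrow> ereal) \<Rightarrow> 'a \<Rightarrow> 'a set" where
  "lim_subdiff \<Phi> x = {v. \<bar>\<Phi> x\<bar> \<noteq> \<infinity> \<and>
     (\<exists>X V. X \<longlonglongrightarrow> x \<and> (\<lambda>k. \<Phi> (X k)) \<longlonglongrightarrow> \<Phi> x \<and> V \<longlonglongrightarrow> v \<and>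
            (\<forall>k. V k \<in> reg_subdiff \<Phi> (X k)))}"

text \<open>KL property with exponent theta, desingularizing function psi(s) = rho s^(1-theta),
  psi'(s) = rho (1-theta) s^(-theta).  Convention dist(0, empty) = +infinity: the
  inequality is only required when the subdifferential is nonempty.\<close>
definition KL_exponent :: "('a::real_inner \<Rightarrow> ereal) \<Rightarrow> real \<Rightarrow> bool" where
  "KL_exponent \<Phi> \<theta> \<longleftrightarrow> (\<forall>wb. lim_subdiff \<Phi> wb \<noteq> {} \<longrightarrow>
     (\<exists>\<epsilon>>0. \<exists>\<eta>>0. \<exists>\<rho>>0. \<forall>w.
        norm (w - wb) < \<epsilon> \<and> \<Phi> wb < \<Phi> w \<and> \<Phi> w < \<Phi> wb + ereal \<eta> \<and> lim_subdiff \<Phi> w \<noteq> {}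
        \<longrightarrow> \<rho> * (1 - \<theta>) * (real_of_ereal (\<Phi> w - \<Phi> wb)) powr (- \<theta>)
              * infdist 0 (lim_subdiff \<Phi> w) \<ge> 1))"

definition sharing_obj ::
  "('N::finite \<Rightarrow> real^'n \<Rightarrow> real) \<Rightarrow> (real^'n \<Rightarrow> ereal) \<Rightarrow> real^'n^'N \<Rightarrow> ereal" where
  "sharing_obj f g x = ereal ((1 / real CARD('N)) * (\<Sum>i\<in>UNIV. f i (x $ i))) + g (\<Sum>i\<in>UNIV. x $ i)"

text \<open>The sharing algorithm. State (s, s~); gf i is the gradient of f i.\<close>
definition sharing_w :: "(real^'n \<Rightarrow> ereal) \<Rightarrow> real \<Rightarrow> real^'n \<Rightarrow> real^'n" where
  "sharing_w g gt st = (1 / gt) *\<^sub>R (prox gt g st - st)"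

fun sharing_state ::
  "('N::finite \<Rightarrow> real^'n \<Rightarrow> real^'n) \<Rightarrow> (real^'n \<Rightarrow> ereal) \<Rightarrow> ('N \<Rightarrow> real)
   \<Rightarrow> real^'n^'N \<Rightarrow> (nat \<Rightarrow> 'N set) \<Rightarrow> nat \<Rightarrow> (real^'n^'N) \<times> (real^'n)" where
  "sharing_state gf g \<gamma> xinit I 0 =
     (let s = (\<chi> i. xinit $ i - (\<gamma> i / real CARD('N)) *\<^sub>R gf i (xinit $ i))
      in (s, \<Sum>i\<in>UNIV. s $ i))"
| "sharing_state gf g \<gamma> xinit I (Suc k) =
     (let (s, st) = sharing_state gf g \<gamma> xinit I k;
          w = sharing_w g (\<Sum>i\<in>UNIV. \<gamma> i) st;
          v = (\<lambda>i. s $ i + \<gamma> i *\<^sub>R w - (\<gamma> i / real CARD('N)) *\<^sub>R gf i (s $ i + \<gamma> i *\<^sub>R w))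
      in ((\<chi> i. if i \<in> I (Suc k) then v i else s $ i),
          st + (\<Sum>i\<in>I (Suc k). v i - s $ i)))"

definition sharing_z ::
  "('N::finite \<Rightarrow> real^'n \<Rightarrow> real^'n) \<Rightarrow> (real^'n \<Rightarrow> ereal) \<Rightarrow> ('N \<Rightarrow> real)
   \<Rightarrow> real^'n^'N \<Rightarrow> (nat \<Rightarrow> 'N set) \<Rightarrow> nat \<Rightarrow> real^'n^'N" where
  "sharing_z gf g \<gamma> xinit I k =
     (let (s, st) = sharing_state gf g \<gamma> xinit I k;
          w = sharing_w g (\<Sum>i\<in>UNIV. \<gamma> i) st
      in (\<chi> i. s $ i + \<gamma> i *\<^sub>R w))"

definition essentially_cyclic :: "(nat \<Rightarrow> 'N::finite set) \<Rightarrow> bool" where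
  "essentially_cyclic I \<longleftrightarrow> (\<exists>T::nat. T \<ge> 1 \<and> (\<forall>k i. \<exists>t\<in>{1..T}. i \<in> I (k + t)))"

end

theory Submission
  imports Defs
begin

lemma lsc_le:
  assumes "lsc_fun g" "X \<longlonglongrightarrow> x" "eventually (\<lambda>k. g (X k) \<le> c) sequentially"
  shows "g x \<le> c"
proof -
  have "g x \<le> liminf (\<lambda>k. g (X k))" using assms(1,2) unfolding lsc_fun_def by blast
  also have "\<dots> \<le> c" by (rule Liminf_le) (simp_all add: assms)
  finally show ?thesis .
qed

lemma ereal_all_le_minf: "(\<And>c. x \<le> ereal c) \<Longrightarrow> x = -\<infinity>"
proof (cases x)
  case (real r) assume "\<And>c. x \<le> ereal c" then have "x \<le> ereal (r - 1)" . with real show ?thesis by simp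
next
  case PInf assume "\<And>c. x \<le> ereal c" then have "x \<le> ereal 0" . with PInf show ?thesis by simp
qed simp

lemma lsc_bdd_below:
  fixes g :: "'a::metric_space \<Rightarrow> ereal"
  assumes lsc: "lsc_fun g" and nm: "\<forall>x. g x \<noteq> -\<infinity>" and K: "compact K"
  shows "\<exists>m::real. \<forall>x\<in>K. ereal m \<le> g x"
proof (rule ccontr)
  assume "\<not> ?thesis"
  then have "\<forall>k::nat. \<exists>x\<in>K. g x < ereal (- real k)" by (metis not_le)
  then obtain X where X: "\<And>k. X k \<in> K" "\<And>k. g (X k) < ereal (- real k)" by metis
  obtain l r where l: "l \<in> K" "strict_mono r" "(X \<circ> r) \<longlonglongrightarrow> l"
    using compact_imp_seq_compact[OF K] X(1) seq_compactE by metis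
  have "g l \<le> ereal c" for c
  proof (rule lsc_le[OF lsc l(3)])
    show "\<forall>\<^sub>F k in sequentially. g ((X \<circ> r) k) \<le> ereal c"
    proof (rule eventually_sequentiallyI[of "nat \<lceil>- c\<rceil>"])
      fix k assume k: "nat \<lceil>- c\<rceil> \<le> k"
      have "k \<le> r k" using seq_suble[OF l(2)] by simp
      then have "- real (r k) \<le> c" using k by linarith
      then have "ereal (- real (r k)) \<le> ereal c" by simp
      then show "g ((X \<circ> r) k) \<le> ereal c" using X(2)[of "r k"]
        by (simp, meson less_imp_le order_less_le_trans)
    qed
  qed
  then have "g l = -\<infinity>" by (rule ereal_all_le_minf)
  with nm show False by simp
qed

lemma g_lower:
  fixes g :: "'a::euclidean_space \<Rightarrow> ereal"
  assumes pr: "proper_fun g" and cv: "ereal_convex g" and lsc: "lsc_fun g"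
  shows "\<exists>A B. B \<ge> 0 \<and> (\<forall>u. ereal (A - B * norm u) \<le> g u)"
proof -
  obtain x0 where x0: "g x0 \<noteq> \<infinity>" using pr unfolding proper_fun_def by blast
  have nm: "\<forall>x. g x \<noteq> -\<infinity>" using pr unfolding proper_fun_def by blast
  then obtain g0 where g0: "g x0 = ereal g0" using x0 by (cases "g x0") auto
  obtain m where m: "\<forall>x\<in>cball x0 1. ereal m \<le> g x"
    using lsc_bdd_below[OF lsc nm compact_cball] by blast
  define B where "B = \<bar>g0 - m\<bar>"
  have key: "ereal (min m g0 - B * norm (u - x0)) \<le> g u" for u
  proof (cases "norm (u - x0) \<le> 1")
    case True
    then have "ereal m \<le> g u" using m by (simp add: dist_norm norm_minus_commute)
    moreover have "min m g0 - B * norm (u - x0) \<le> m" unfolding B_def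
      using mult_nonneg_nonneg[OF abs_ge_zero norm_ge_zero, of "g0 - m" "u - x0"] by linarith
    ultimately show ?thesis by (meson ereal_less_eq(3) order_trans)
  next
    case False
    define d where "d = norm (u - x0)"
    have d1: "d > 1" using False d_def by simp
    define t where "t = 1 / d"
    have t: "0 < t" "t < 1" using d1 t_def by auto
    define p where "p = (1 - t) *\<^sub>R x0 + t *\<^sub>R u"
    have "p - x0 = t *\<^sub>R (u - x0)" unfolding p_def by (simp add: algebra_simps)
    then have "norm (x0 - p) = 1" using t d1 unfolding t_def d_def by (simp add: norm_minus_commute)
    then have "ereal m \<le> g p" using m by (simp add: dist_norm)
    also have "g p \<le> ereal (1 - t) * g x0 + ereal t * g u"
      using cv t unfolding ereal_convex_def p_def by blast
    finally have mp: "ereal m \<le> ereal (1 - t) * g x0 + ereal t * g u" .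
    show ?thesis
    proof (cases "g u")
      case (real gu)
      with mp g0 have "m \<le> (1 - t) * g0 + t * gu" by simp
      then have "m * d \<le> ((1 - t) * g0 + t * gu) * d" using d1 by (intro mult_right_mono) auto
      also have "((1 - t) * g0 + t * gu) * d = (d - 1) * g0 + gu" using d1 unfolding t_def by (simp add: field_simps)
      finally have "gu \<ge> g0 + d * (m - g0)" by (simp add: algebra_simps)
      moreover have "d * (m - g0) \<ge> - B * d" using d1 unfolding B_def
        using mult_right_mono[of "- \<bar>g0 - m\<bar>" "m - g0" d] by (simp add: mult.commute)
      moreover have "- B * d \<ge> min m g0 - g0 - B * d" by simp
      ultimately have "min m g0 - B * d \<le> gu" by linarith
      then show ?thesis using real d_def by simp
    qed (use nm in auto)
  qed
  show ?thesis
  proof (intro exI conjI allI)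
    show "B \<ge> 0" unfolding B_def by simp
    fix u
    have "norm (u - x0) \<le> norm u + norm x0" by (simp add: norm_triangle_ineq4)
    then have "min m g0 - B * norm x0 - B * norm u \<le> min m g0 - B * norm (u - x0)"
      using \<open>B \<ge> 0\<close> unfolding B_def
      by (smt (verit, ccfv_SIG) mult_left_mono distrib_left)
    then show "ereal (min m g0 - B * norm x0 - B * norm u) \<le> g u"
      using key[of u] by (meson ereal_less_eq(3) order_trans)
  qed
qed

lemma prox_exists:
  fixes g :: "'a::euclidean_space \<Rightarrow> ereal"
  assumes pr: "proper_fun g" and cv: "ereal_convex g" and lsc: "lsc_fun g" and t: "t > 0"
  shows "\<exists>w. \<forall>v. g w + ereal ((norm (w - u))\<^sup>2 / (2 * t)) \<le> g v + ereal ((norm (v - u))\<^sup>2 / (2 * t))"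
proof -
  define q where "q v = (norm (v - u))\<^sup>2 / (2 * t)" for v
  define h where "h v = g v + ereal (q v)" for v
  have nm: "\<forall>x. g x \<noteq> -\<infinity>" using pr unfolding proper_fun_def by blast
  obtain x0 where x0: "g x0 \<noteq> \<infinity>" using pr unfolding proper_fun_def by blast
  then obtain g0 where g0: "g x0 = ereal g0" using nm by (cases "g x0") auto
  obtain A B where AB: "B \<ge> 0" "\<And>u. ereal (A - B * norm u) \<le> g u" using g_lower[OF pr cv lsc] by blast
  define H0 where "H0 = g0 + q x0"
  have hx0: "h x0 = ereal H0" unfolding h_def H0_def g0 by simp
  define c where "c = H0 - A + B * norm u"
  define R where "R = max 1 (2 * t * (B + \<bar>c\<bar> + 1))"
  have hlow: "ereal (A - B * norm v + q v) \<le> h v" for v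
    using AB(2)[of v] unfolding h_def by (cases "g v") auto
  have far: "h v > ereal H0" if "norm (v - u) > R" for v
  proof -
    define d where "d = norm (v - u)"
    have d: "d > R" "d \<ge> 1" using that R_def d_def by auto
    have nv: "norm v \<le> d + norm u" unfolding d_def using norm_triangle_sub[of v u] by simp
    have "B * norm v \<le> B * d + B * norm u" using mult_left_mono[OF nv AB(1)] by (simp add: distrib_left)
    moreover have "d * d / (2 * t) \<ge> d * (B + \<bar>c\<bar> + 1)"
    proof -
      have "d * d \<ge> d * (2 * t * (B + \<bar>c\<bar> + 1))" using d R_def by (intro mult_left_mono) auto
      then show ?thesis using t by (simp add: field_simps)
    qed
    moreover have "d * (\<bar>c\<bar> + 1) \<ge> \<bar>c\<bar> + 1" using mult_right_mono[of 1 d "\<bar>c\<bar> + 1"] d by simp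
    moreover have "q v = d * d / (2 * t)" unfolding q_def d_def by (simp add: power2_eq_square)
    moreover have "d * (B + \<bar>c\<bar> + 1) = d * B + d * (\<bar>c\<bar> + 1)" by (simp add: algebra_simps)
    moreover have "c \<le> \<bar>c\<bar>" by simp
    ultimately have "A - B * norm v + q v > H0" unfolding c_def by (simp add: mult.commute)
    then show ?thesis by (intro less_le_trans[OF _ hlow[of v]]) simp
  qed
  define K where "K = cball u R"
  have K: "compact K" unfolding K_def by simp
  have x0K: "x0 \<in> K"
  proof (rule ccontr)
    assume "x0 \<notin> K"
    then have "norm (x0 - u) > R" unfolding K_def by (simp add: dist_norm norm_minus_commute)
    then show False using far[of x0] hx0 by simp
  qed
  define lb where "lb = A - B * (R + norm u)"
  have Klb: "ereal lb \<le> h v" if "v \<in> K" for v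
  proof -
    have "norm v \<le> R + norm u" using that norm_triangle_sub[of v u] unfolding K_def
      by (simp add: dist_norm norm_minus_commute)
    then have "B * norm v \<le> B * (R + norm u)" using AB(1) by (simp add: mult_left_mono)
    moreover have "q v \<ge> 0" unfolding q_def using t by simp
    ultimately have "lb \<le> A - B * norm v + q v" unfolding lb_def by linarith
    then show ?thesis by (intro order_trans[OF _ hlow[of v]]) simp
  qed
  define m where "m = (INF v\<in>K. h v)"
  have mle: "m \<le> h v" if "v \<in> K" for v unfolding m_def using that by (simp add: INF_lower)
  have mge: "ereal lb \<le> m" unfolding m_def using Klb by (simp add: le_INF_iff)
  have "m \<le> ereal H0" using mle[OF x0K] hx0 by simp
  then obtain mr where mr: "m = ereal mr" using mge by (cases m) auto
  have "\<forall>k::nat. \<exists>v\<in>K. h v < ereal (mr + 1 / (real k + 1))"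
  proof
    fix k :: nat
    have "m < ereal (mr + 1 / (real k + 1))" using mr by simp
    then show "\<exists>v\<in>K. h v < ereal (mr + 1 / (real k + 1))" unfolding m_def by (simp add: INF_less_iff)
  qed
  then obtain X where X: "\<And>k. X k \<in> K" "\<And>k. h (X k) < ereal (mr + 1 / (real k + 1))" by metis
  obtain l r where l: "l \<in> K" "strict_mono r" "(X \<circ> r) \<longlonglongrightarrow> l"
    using compact_imp_seq_compact[OF K] X(1) seq_compactE by metis
  have qc: "continuous_on UNIV q" unfolding q_def using t by (intro continuous_intros) auto
  have qlim: "(\<lambda>k. q (X (r k))) \<longlonglongrightarrow> q l"
    using continuous_on_tendsto_compose[OF qc l(3)] by (simp add: o_def)
  have rlim: "(\<lambda>k. 1 / (real (r k) + 1)) \<longlonglongrightarrow> 0"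
  proof -
    have "(\<lambda>k. 1 / (real k + 1)) \<longlonglongrightarrow> (0::real)" using LIMSEQ_inverse_real_of_nat by (simp add: inverse_eq_divide add.commute)
    from LIMSEQ_subseq_LIMSEQ[OF this l(2)] show ?thesis by (simp add: o_def)
  qed
  have gl: "g l \<le> ereal (mr - q l + \<delta>)" if \<delta>: "\<delta> > 0" for \<delta>
  proof (rule lsc_le[OF lsc l(3)])
    have lim2: "(\<lambda>k. mr + 1 / (real (r k) + 1) - q (X (r k))) \<longlonglongrightarrow> mr + 0 - q l"
      by (intro tendsto_intros rlim qlim)
    then have "eventually (\<lambda>k. mr + 1 / (real (r k) + 1) - q (X (r k)) < mr - q l + \<delta>) sequentially"
      using \<delta> by (intro order_tendstoD) auto
    then show "\<forall>\<^sub>F k in sequentially. g ((X \<circ> r) k) \<le> ereal (mr - q l + \<delta>)"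
    proof (rule eventually_mono)
      fix k assume a: "mr + 1 / (real (r k) + 1) - q (X (r k)) < mr - q l + \<delta>"
      have "h (X (r k)) < ereal (mr + 1 / (real (r k) + 1))" by (rule X(2))
      then have f1: "g (X (r k)) < ereal (mr + 1 / (real (r k) + 1) - q (X (r k)))"
        unfolding h_def using nm by (cases "g (X (r k))") auto
      have f2: "ereal (mr + 1 / (real (r k) + 1) - q (X (r k))) \<le> ereal (mr - q l + \<delta>)" using a by simp
      show "g ((X \<circ> r) k) \<le> ereal (mr - q l + \<delta>)" using less_imp_le[OF less_le_trans[OF f1 f2]] by simp
    qed
  qed
  have "g l \<le> ereal (mr - q l)"
  proof (cases "g l")
    case (real a)
    have "a \<le> mr - q l + \<delta>" if "\<delta> > 0" for \<delta> using gl[OF that] real by simp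
    then have "a \<le> mr - q l" by (meson field_le_epsilon)
    then show ?thesis using real by simp
  next
    case PInf then show ?thesis using gl[of 1] by simp
  qed (use nm in auto)
  then have hl: "h l \<le> m" unfolding h_def mr by (cases "g l") auto
  show ?thesis
  proof (intro exI allI)
    fix v
    have "h l \<le> h v"
    proof (cases "v \<in> K")
      case True then show ?thesis using order_trans[OF hl mle] by blast
    next
      case False
      then have "norm (v - u) > R" unfolding K_def by (simp add: dist_norm norm_minus_commute)
      then have "h v > ereal H0" by (rule far)
      then show ?thesis using order_trans[OF hl \<open>m \<le> ereal H0\<close>] by simp
    qed
    then show "g l + ereal ((norm (l - u))\<^sup>2 / (2 * t)) \<le> g v + ereal ((norm (v - u))\<^sup>2 / (2 * t))"
      unfolding h_def q_def .
  qed
qed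

lemma norm_add_scale_sq:
  fixes a b :: "'a::real_inner"
  shows "(norm (a + \<tau> *\<^sub>R b))\<^sup>2 = (norm a)\<^sup>2 + 2 * \<tau> * inner a b + \<tau>\<^sup>2 * (norm b)\<^sup>2"
  by (simp only: power2_norm_eq_inner) (simp add: inner_add_left inner_add_right inner_commute algebra_simps power2_eq_square)

lemma le_of_small_tau:
  fixes x C :: real
  assumes "\<And>\<tau>. 0 < \<tau> \<Longrightarrow> \<tau> < 1 \<Longrightarrow> x \<le> \<tau> * C" "0 \<le> C"
  shows "x \<le> 0"
proof (rule field_le_epsilon)
  fix e :: real assume e: "0 < e"
  define \<tau> where "\<tau> = min (1/2) (e / (C + 1))"
  have \<tau>: "0 < \<tau>" "\<tau> < 1" unfolding \<tau>_def using e assms(2) by auto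
  have "\<tau> * C \<le> e / (C + 1) * C" unfolding \<tau>_def using assms(2) by (intro mult_right_mono) auto
  also have "\<dots> \<le> e" using e assms(2) by (simp add: field_simps)
  finally show "x \<le> 0 + e" using assms(1)[OF \<tau>] by simp
qed

lemma prox_min:
  fixes g :: "'a::euclidean_space \<Rightarrow> ereal"
  assumes pr: "proper_fun g" and cv: "ereal_convex g" and lsc: "lsc_fun g" and t: "t > 0"
  shows "g (prox t g s) + ereal ((norm (prox t g s - s))\<^sup>2 / (2 * t)) \<le> g v + ereal ((norm (v - s))\<^sup>2 / (2 * t))"
  using someI_ex[OF prox_exists[OF pr cv lsc t, of s]] unfolding prox_def by blast

lemma prox_subgrad:
  fixes g :: "'a::euclidean_space \<Rightarrow> ereal"
  assumes pr: "proper_fun g" and cv: "ereal_convex g" and lsc: "lsc_fun g" and t: "t > 0"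
  shows "\<exists>P. g (prox t g s) = ereal P \<and>
     (\<forall>v. ereal (P + inner ((1/t) *\<^sub>R (s - prox t g s)) (v - prox t g s)) \<le> g v)"
proof -
  define p where "p = prox t g s"
  define q where "q v = (norm (v - s))\<^sup>2 / (2 * t)" for v
  have mn: "g p + ereal (q p) \<le> g v + ereal (q v)" for v
    unfolding p_def q_def using prox_min[OF pr cv lsc t] .
  have nm: "\<forall>x. g x \<noteq> -\<infinity>" using pr unfolding proper_fun_def by blast
  obtain x0 where x0: "g x0 \<noteq> \<infinity>" using pr unfolding proper_fun_def by blast
  have "g p \<noteq> \<infinity>" using mn[of x0] x0 nm by (cases "g x0") auto
  then obtain P where P: "g p = ereal P" using nm by (cases "g p") auto
  have "ereal (P + inner ((1/t) *\<^sub>R (s - p)) (v - p)) \<le> g v" for v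
  proof (cases "g v")
    case (real G)
    define d where "d = v - p"
    have "P - G - inner (p - s) d / t \<le> 0"
    proof (rule le_of_small_tau)
      show "0 \<le> (norm d)\<^sup>2 / (2 * t)" using t by simp
      fix \<tau> :: real assume \<tau>: "0 < \<tau>" "\<tau> < 1"
      define pt where "pt = (1 - \<tau>) *\<^sub>R p + \<tau> *\<^sub>R v"
      have "g pt \<le> ereal (1 - \<tau>) * g p + ereal \<tau> * g v"
        using cv \<tau> unfolding ereal_convex_def pt_def by blast
      then have gpt: "g pt \<le> ereal ((1 - \<tau>) * P + \<tau> * G)" using P real by simp
      have "ereal (P + q p) \<le> g pt + ereal (q pt)" using mn[of pt] P by simp
      also have "\<dots> \<le> ereal ((1 - \<tau>) * P + \<tau> * G) + ereal (q pt)" using gpt by (rule add_right_mono)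
      finally have ineq: "P + q p \<le> (1 - \<tau>) * P + \<tau> * G + q pt" by simp
      have eq: "pt - s = (p - s) + \<tau> *\<^sub>R d" unfolding pt_def d_def by (simp add: algebra_simps)
      have "q pt = ((norm (p - s))\<^sup>2 + 2 * \<tau> * inner (p - s) d + \<tau>\<^sup>2 * (norm d)\<^sup>2) / (2 * t)"
        unfolding q_def eq norm_add_scale_sq ..
      then have "q pt - q p = \<tau> * (inner (p - s) d / t) + \<tau> * (\<tau> * ((norm d)\<^sup>2 / (2 * t)))"
        unfolding q_def using t by (simp add: field_simps power2_eq_square)
      then have "\<tau> * P \<le> \<tau> * G + \<tau> * (inner (p - s) d / t) + \<tau> * (\<tau> * ((norm d)\<^sup>2 / (2 * t)))"
        using ineq by (simp add: algebra_simps)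
      then have h: "\<tau> * (P - G - inner (p - s) d / t) \<le> \<tau> * (\<tau> * ((norm d)\<^sup>2 / (2 * t)))"
        by (simp add: algebra_simps)
      show "P - G - inner (p - s) d / t \<le> \<tau> * ((norm d)\<^sup>2 / (2 * t))"
        by (rule mult_left_le_imp_le[OF h \<tau>(1)])
    qed
    moreover have "inner ((1/t) *\<^sub>R (s - p)) d = - (inner (p - s) d / t)"
      by (simp add: inner_diff_left) (metis minus_diff_eq minus_divide_left)
    ultimately show ?thesis using real d_def by simp
  qed (use nm in auto)
  then show ?thesis using P unfolding p_def by blast
qed

lemma deriv_line:
  fixes f :: "'a::real_inner \<Rightarrow> real"
  assumes fd: "\<And>x. (f has_derivative (\<lambda>h. inner (gf x) h)) (at x)"
  shows "((\<lambda>\<tau>. f (x + \<tau> *\<^sub>R h)) has_real_derivative inner (gf (x + \<tau> *\<^sub>R h)) h) (at \<tau>)"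
proof -
  have l: "((\<lambda>\<tau>::real. x + \<tau> *\<^sub>R h) has_derivative (\<lambda>s. s *\<^sub>R h)) (at \<tau>)"
    by (auto intro!: derivative_eq_intros)
  have "((\<lambda>\<tau>. f (x + \<tau> *\<^sub>R h)) has_derivative (\<lambda>s. inner (gf (x + \<tau> *\<^sub>R h)) (s *\<^sub>R h))) (at \<tau>)"
    using has_derivative_compose[OF l fd] .
  then show ?thesis unfolding has_field_derivative_def
    by (rule has_derivative_eq_rhs) (auto simp: fun_eq_iff)
qed

lemma descent_lemma:
  fixes f :: "'a::real_inner \<Rightarrow> real"
  assumes fd: "\<And>x. (f has_derivative (\<lambda>h. inner (gf x) h)) (at x)"
    and lip: "\<And>x y. norm (gf x - gf y) \<le> L * norm (x - y)"
  shows "\<bar>f y - f x - inner (gf x) (y - x)\<bar> \<le> L / 2 * (norm (y - x))\<^sup>2"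
proof -
  define h where "h = y - x"
  have bnd: "\<bar>inner (gf (x + \<tau> *\<^sub>R h)) h - inner (gf x) h\<bar> \<le> L * \<tau> * (norm h)\<^sup>2" if "0 \<le> \<tau>" for \<tau>
  proof -
    have "\<bar>inner (gf (x + \<tau> *\<^sub>R h)) h - inner (gf x) h\<bar> = \<bar>inner (gf (x + \<tau> *\<^sub>R h) - gf x) h\<bar>"
      by (simp add: inner_diff_left)
    also have "\<dots> \<le> norm (gf (x + \<tau> *\<^sub>R h) - gf x) * norm h" by (rule Cauchy_Schwarz_ineq2)
    also have "\<dots> \<le> L * norm (\<tau> *\<^sub>R h) * norm h" using lip[of "x + \<tau> *\<^sub>R h" x] by (simp add: mult_right_mono)
    also have "\<dots> = L * \<tau> * (norm h)\<^sup>2" using that by (simp add: power2_eq_square)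
    finally show ?thesis .
  qed
  define c where "c = inner (gf x) h"
  define n2 where "n2 = (norm h)\<^sup>2"
  define \<phi> where "\<phi> \<tau> = f (x + \<tau> *\<^sub>R h) - \<tau> * c - L / 2 * \<tau>\<^sup>2 * n2" for \<tau>
  define \<psi> where "\<psi> \<tau> = f (x + \<tau> *\<^sub>R h) - \<tau> * c + L / 2 * \<tau>\<^sup>2 * n2" for \<tau>
  have d\<phi>: "(\<phi> has_real_derivative inner (gf (x + \<tau> *\<^sub>R h)) h - c - L * \<tau> * n2) (at \<tau>)" for \<tau>
    unfolding \<phi>_def by (rule derivative_eq_intros deriv_line[OF fd] | simp)+
  have d\<psi>: "(\<psi> has_real_derivative inner (gf (x + \<tau> *\<^sub>R h)) h - c + L * \<tau> * n2) (at \<tau>)" for \<tau>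
    unfolding \<psi>_def by (rule derivative_eq_intros deriv_line[OF fd] | simp)+
  have "\<phi> 1 \<le> \<phi> 0"
  proof (rule DERIV_nonpos_imp_nonincreasing[of 0 1])
    fix \<tau> :: real assume "0 \<le> \<tau>" "\<tau> \<le> 1"
    then show "\<exists>y. DERIV \<phi> \<tau> :> y \<and> y \<le> 0" using d\<phi>[of \<tau>] bnd[of \<tau>] unfolding c_def n2_def
      by (intro exI[of _ "inner (gf (x + \<tau> *\<^sub>R h)) h - c - L * \<tau> * n2"]) (auto simp: c_def n2_def)
  qed simp
  moreover have "\<psi> 0 \<le> \<psi> 1"
  proof (rule DERIV_nonneg_imp_nondecreasing[of 0 1])
    fix \<tau> :: real assume "0 \<le> \<tau>" "\<tau> \<le> 1"
    then show "\<exists>y. DERIV \<psi> \<tau> :> y \<and> y \<ge> 0" using d\<psi>[of \<tau>] bnd[of \<tau>] unfolding c_def n2_def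
      by (intro exI[of _ "inner (gf (x + \<tau> *\<^sub>R h)) h - c + L * \<tau> * n2"]) (auto simp: c_def n2_def)
  qed simp
  ultimately have "f y - f x - inner (gf x) (y - x) \<le> L / 2 * (norm (y - x))\<^sup>2"
      "- (f y - f x - inner (gf x) (y - x)) \<le> L / 2 * (norm (y - x))\<^sup>2"
    unfolding \<phi>_def \<psi>_def c_def n2_def h_def by (simp_all add: algebra_simps)
  then show ?thesis unfolding abs_le_iff by blast
qed

lemma powr_concave_ineq:
  fixes a b \<beta> :: real
  assumes "0 \<le> b" "b \<le> a" "0 < a" "0 < \<beta>" "\<beta> < 1"
  shows "\<beta> * a powr (\<beta> - 1) * (a - b) \<le> a powr \<beta> - b powr \<beta>"
proof (cases "b = 0")
  case True
  have "a powr (\<beta> - 1) * a = a powr \<beta>" using assms by (simp add: powr_diff)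
  then have "\<beta> * a powr (\<beta> - 1) * (a - b) = \<beta> * a powr \<beta>" using True by (simp add: algebra_simps)
  also have "\<dots> \<le> a powr \<beta>" using assms by (simp add: mult_le_cancel_right1)
  finally show ?thesis using True by simp
next
  case False
  then have b: "0 < b" using assms by simp
  show ?thesis
  proof (cases "b = a")
    case True then show ?thesis by simp
  next
    case False
    then have ba: "b < a" using assms by simp
    have "\<exists>z>b. z < a \<and> a powr \<beta> - b powr \<beta> = (a - b) * (\<beta> * z powr (\<beta> - 1))"
      using ba b by (intro MVT2) (auto intro!: has_real_derivative_powr)
    then obtain \<xi> where \<xi>: "b < \<xi>" "\<xi> < a" "a powr \<beta> - b powr \<beta> = (a - b) * (\<beta> * \<xi> powr (\<beta> - 1))"
      by blast
    have "a powr (\<beta> - 1) \<le> \<xi> powr (\<beta> - 1)" using \<xi> b assms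
      by (intro powr_mono2') auto
    then have "\<beta> * a powr (\<beta> - 1) * (a - b) \<le> \<beta> * \<xi> powr (\<beta> - 1) * (a - b)"
      using assms ba by (intro mult_right_mono mult_left_mono) auto
    then show ?thesis using \<xi>(3) by (simp add: algebra_simps)
  qed
qed

lemma telescope_window:
  fixes a :: "nat \<Rightarrow> real"
  shows "(\<Sum>j<n. a (k + j) - a (k + j + T)) = (\<Sum>t<T. a (k + t)) - (\<Sum>t<T. a (k + n + t))"
proof (induction n)
  case 0 then show ?case by simp
next
  case (Suc n)
  have "(\<Sum>t<T. a (k + n + t)) - (\<Sum>t<T. a (k + Suc n + t)) = (\<Sum>t<T. a (k + n + t) - a (k + n + Suc t))"
    by (simp add: sum_subtractf)
  also have "\<dots> = a (k + n) - a (k + n + T)"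
    using sum_lessThan_telescope'[of "\<lambda>t. a (k + n + t)" T] by simp
  finally show ?case using Suc by (simp add: algebra_simps)
qed

lemma dist_chain:
  fixes z :: "nat \<Rightarrow> 'a::metric_space"
  assumes "\<And>k. dist (z (Suc k)) (z k) \<le> \<Delta> k"
  shows "dist (z (k + n)) (z k) \<le> (\<Sum>j<n. \<Delta> (k + j))"
proof (induction n)
  case 0 then show ?case by simp
next
  case (Suc n)
  have "dist (z (k + Suc n)) (z k) \<le> dist (z (Suc (k + n))) (z (k + n)) + dist (z (k + n)) (z k)"
    using dist_triangle by simp
  also have "\<dots> \<le> \<Delta> (k + n) + (\<Sum>j<n. \<Delta> (k + j))" using assms Suc by (intro add_mono) auto
  finally show ?case by (simp add: add.commute)
qed

locale kl_seq =
  fixes z :: "nat \<Rightarrow> 'a::complete_space" and xs :: 'a and r \<Delta> D :: "nat \<Rightarrow> real"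
    and c C1 B \<alpha> \<epsilon> :: real and T K0 :: nat
  assumes r0: "\<And>k. 0 \<le> r k" and rlim: "r \<longlonglongrightarrow> 0"
    and dec: "\<And>k. c * (\<Delta> k)\<^sup>2 \<le> r k - r (Suc k)" and c: "c > 0"
    and \<Delta>0: "\<And>k. 0 \<le> \<Delta> k" and dz: "\<And>k. dist (z (Suc k)) (z k) \<le> \<Delta> k"
    and Dle: "\<And>k. D k \<le> C1 * (\<Sum>j<T. \<Delta> (k + j))" and T: "T \<ge> 1" and C1: "C1 > 0"
    and cl: "\<And>K \<delta>. \<delta> > 0 \<Longrightarrow> \<exists>k\<ge>K. dist (z k) xs < \<delta>"
    and \<alpha>: "0 < \<alpha>" "\<alpha> < 1" and \<epsilon>: "\<epsilon> > 0" and B: "B > 0"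
    and kl: "\<And>k. k \<ge> K0 \<Longrightarrow> dist (z k) xs < \<epsilon> \<Longrightarrow> r k powr \<alpha> \<le> B * D k"
begin

definition "good k \<longleftrightarrow> k \<ge> K0 \<and> dist (z k) xs < \<epsilon>"
definition "\<phi> x = x powr (1 - \<alpha>)"
definition "M = real T * B * C1 / (c * (1 - \<alpha>))"

lemma r_suc: "r (Suc k) \<le> r k"
proof -
  have "0 \<le> c * (\<Delta> k)\<^sup>2" using c by simp
  then show ?thesis using dec[of k] by linarith
qed

lemma r_mono: "k \<le> m \<Longrightarrow> r m \<le> r k"
  by (rule lift_Suc_antimono_le[of r]) (use r_suc in auto)

lemma \<phi>_mono: "r m \<le> r k \<Longrightarrow> \<phi> (r m) \<le> \<phi> (r k)"
  unfolding \<phi>_def using r0 \<alpha> by (intro powr_mono2) auto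

lemma \<phi>_nonneg: "0 \<le> \<phi> x" unfolding \<phi>_def by simp

lemma M_pos: "M > 0" unfolding M_def using T B C1 c \<alpha> by auto

lemma window_dec: "c * (\<Sum>j<T. (\<Delta> (k + j))\<^sup>2) \<le> r k - r (k + T)"
proof -
  have "c * (\<Sum>j<T. (\<Delta> (k + j))\<^sup>2) = (\<Sum>j<T. c * (\<Delta> (k + j))\<^sup>2)" by (simp add: sum_distrib_left)
  also have "\<dots> \<le> (\<Sum>j<T. r (k + j) - r (Suc (k + j)))" by (intro sum_mono dec)
  also have "\<dots> = r k - r (k + T)" using sum_lessThan_telescope'[of "\<lambda>j. r (k + j)" T] by simp
  finally show ?thesis .
qed

lemma window_cs: "(\<Sum>j<T. \<Delta> (k + j))\<^sup>2 \<le> real T * (\<Sum>j<T. (\<Delta> (k + j))\<^sup>2)"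
  using sum_squared_le_sum_of_squares[of "\<lambda>j. \<Delta> (k + j)" "{..<T}"] by (simp add: mult.commute)

lemma window_good:
  assumes "good k"
  shows "(\<Sum>j<T. \<Delta> (k + j)) \<le> M * (\<phi> (r k) - \<phi> (r (k + T)))"
proof -
  define S where "S = (\<Sum>j<T. \<Delta> (k + j))"
  define Q where "Q = (\<Sum>j<T. (\<Delta> (k + j))\<^sup>2)"
  define dr where "dr = r k - r (k + T)"
  have S0: "S \<ge> 0" unfolding S_def by (intro sum_nonneg \<Delta>0)
  have cQ: "c * Q \<le> dr" unfolding Q_def dr_def by (rule window_dec)
  have SS: "S * S \<le> real T * Q" unfolding S_def Q_def using window_cs[of k] by (simp add: power2_eq_square)
  show ?thesis
  proof (cases "r k = 0")
    case True
    have rk: "r (k + T) = 0" using r_mono[of k "k + T"] r0[of "k+T"] True by simp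
    have "c * Q \<le> 0" using cQ True rk unfolding dr_def by simp
    moreover have "Q \<ge> 0" unfolding Q_def by (intro sum_nonneg) simp
    ultimately have "Q = 0" using c by (simp add: mult_le_0_iff)
    then have "S * S \<le> 0" using SS by simp
    then have "S = 0" using S0 by (simp add: mult_le_0_iff)
    then show ?thesis using True rk unfolding S_def \<phi>_def by simp
  next
    case False
    then have rk: "r k > 0" using r0[of k] by simp
    have rkT: "0 \<le> r (k + T)" "r (k + T) \<le> r k" using r0 r_mono by auto
    have rpa: "r k powr \<alpha> > 0" using rk by simp
    have klk: "r k powr \<alpha> \<le> B * D k" using kl assms unfolding good_def by blast
    also have "\<dots> \<le> B * (C1 * S)" using Dle[of k] B unfolding S_def by (simp add: mult_left_mono)
    finally have kl2: "r k powr \<alpha> \<le> B * C1 * S" by (simp add: mult.assoc)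
    then have Spos: "S > 0" using rpa S0 by (cases "S = 0") auto
    have conc: "(1 - \<alpha>) * r k powr (1 - \<alpha> - 1) * dr \<le> \<phi> (r k) - \<phi> (r (k + T))"
      unfolding \<phi>_def dr_def using powr_concave_ineq[of "r (k+T)" "r k" "1 - \<alpha>"] rkT rk \<alpha> by simp
    have "r k powr (1 - \<alpha> - 1) * r k powr \<alpha> = 1" using rk by (simp add: powr_add[symmetric])
    then have conc2: "(1 - \<alpha>) * dr \<le> (\<phi> (r k) - \<phi> (r (k + T))) * r k powr \<alpha>"
      using mult_right_mono[OF conc less_imp_le[OF rpa]] by (simp add: algebra_simps)
    define F where "F = \<phi> (r k) - \<phi> (r (k + T))"
    have F0: "F \<ge> 0" unfolding F_def using \<phi>_mono[OF rkT(2)] by simp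
    have "c * (1 - \<alpha>) * (S * S) \<le> c * (1 - \<alpha>) * (real T * Q)"
      using SS c \<alpha> by (intro mult_left_mono) auto
    also have "\<dots> = real T * (1 - \<alpha>) * (c * Q)" by (simp add: algebra_simps)
    also have "\<dots> \<le> real T * (1 - \<alpha>) * dr" using cQ \<alpha> by (intro mult_left_mono) auto
    also have "\<dots> = real T * ((1 - \<alpha>) * dr)" by simp
    also have "\<dots> \<le> real T * (F * r k powr \<alpha>)" using conc2 unfolding F_def by (intro mult_left_mono) auto
    also have "\<dots> \<le> real T * (F * (B * C1 * S))" using kl2 F0 by (intro mult_left_mono) auto
    finally have "(c * (1 - \<alpha>) * S) * S \<le> (real T * F * B * C1) * S" by (simp add: algebra_simps)
    then have "c * (1 - \<alpha>) * S \<le> real T * F * B * C1" using Spos by simp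
    then have "S \<le> real T * F * B * C1 / (c * (1 - \<alpha>))" using c \<alpha> by (simp add: field_simps)
    then show ?thesis unfolding M_def F_def S_def by (simp add: field_simps)
  qed
qed

lemma tail_good:
  assumes "\<And>j. j < n \<Longrightarrow> good (k + j)"
  shows "(\<Sum>j<n. \<Delta> (k + j)) \<le> M * real T * \<phi> (r k)"
proof -
  have "(\<Sum>j<n. \<Delta> (k + j)) \<le> (\<Sum>j<n. \<Sum>t<T. \<Delta> (k + j + t))"
  proof (intro sum_mono)
    fix j assume "j \<in> {..<n}"
    have "\<Delta> (k + j + 0) \<le> (\<Sum>t<T. \<Delta> (k + j + t))"
      using T by (intro member_le_sum) (auto intro: \<Delta>0)
    then show "\<Delta> (k + j) \<le> (\<Sum>t<T. \<Delta> (k + j + t))" by simp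
  qed
  also have "\<dots> \<le> (\<Sum>j<n. M * (\<phi> (r (k + j)) - \<phi> (r (k + j + T))))"
    using assms by (intro sum_mono window_good) auto
  also have "\<dots> = M * ((\<Sum>t<T. \<phi> (r (k + t))) - (\<Sum>t<T. \<phi> (r (k + n + t))))"
    using telescope_window[of "\<lambda>m. \<phi> (r m)" k T n] by (simp add: sum_distrib_left[symmetric])
  also have "\<dots> \<le> M * (\<Sum>t<T. \<phi> (r (k + t)))"
    using M_pos by (intro mult_left_mono) (auto intro!: sum_nonneg \<phi>_nonneg)
  also have "\<dots> \<le> M * (\<Sum>t<T. \<phi> (r k))"
    using M_pos by (intro mult_left_mono sum_mono \<phi>_mono r_mono) auto
  finally show ?thesis by (simp add: mult.assoc)
qed

lemma \<phi>_lim: "(\<lambda>k. \<phi> (r k)) \<longlonglongrightarrow> 0"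
  unfolding \<phi>_def using \<alpha> r0 by (intro tendsto_zero_powrI[OF rlim tendsto_const]) auto

lemma all_good: "\<exists>K. \<forall>k\<ge>K. good k"
proof -
  have "eventually (\<lambda>k. M * real T * \<phi> (r k) < \<epsilon> / 2) sequentially"
    using tendsto_mult_left[OF \<phi>_lim, of "M * real T"] \<epsilon> by (intro order_tendstoD) auto
  then obtain K1 where K1: "\<And>k. k \<ge> K1 \<Longrightarrow> M * real T * \<phi> (r k) < \<epsilon> / 2"
    unfolding eventually_sequentially by blast
  obtain K where K: "K \<ge> max K0 K1" "dist (z K) xs < \<epsilon> / 2" using cl[of "\<epsilon>/2" "max K0 K1"] \<epsilon> by auto
  have "good (K + n)" for n
  proof (induction n rule: less_induct)
    case (less n)
    have "dist (z (K + n)) (z K) \<le> (\<Sum>j<n. \<Delta> (K + j))" by (rule dist_chain[of z \<Delta>, OF dz])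
    also have "\<dots> \<le> M * real T * \<phi> (r K)" using less by (intro tail_good) auto
    also have "\<dots> < \<epsilon> / 2" using K1 K by auto
    finally have "dist (z (K + n)) xs < \<epsilon>" using K(2) dist_triangle[of "z (K + n)" xs "z K"] by linarith
    then show ?case unfolding good_def using K by auto
  qed
  then show ?thesis by (metis le_add_diff_inverse)
qed

lemma conv_tail: "z \<longlonglongrightarrow> xs \<and> (\<exists>K. \<forall>k\<ge>K. dist (z k) xs \<le> M * real T * \<phi> (r k))"
proof -
  obtain K where K: "\<And>k. k \<ge> K \<Longrightarrow> good k" using all_good by blast
  have dk: "dist (z (k + n)) (z k) \<le> M * real T * \<phi> (r k)" if "k \<ge> K" for k n
    using dist_chain[of z \<Delta>, OF dz, of k n] tail_good[of n k] K that by force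
  have "Cauchy z" unfolding Cauchy_altdef2
  proof (intro allI impI)
    fix e :: real assume e: "e > 0"
    have "eventually (\<lambda>k. M * real T * \<phi> (r k) < e) sequentially"
      using tendsto_mult_left[OF \<phi>_lim, of "M * real T"] e by (intro order_tendstoD) auto
    then obtain K1 where K1: "\<And>k. k \<ge> K1 \<Longrightarrow> M * real T * \<phi> (r k) < e"
      unfolding eventually_sequentially by blast
    show "\<exists>N. \<forall>n\<ge>N. dist (z n) (z N) < e"
    proof (intro exI allI impI)
      fix n assume "n \<ge> max K K1"
      then have "dist (z (max K K1 + (n - max K K1))) (z (max K K1)) \<le> M * real T * \<phi> (r (max K K1))"
        by (intro dk) auto
      then show "dist (z n) (z (max K K1)) < e" using K1[of "max K K1"] \<open>n \<ge> max K K1\<close> by simp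
    qed
  qed
  then obtain l where l: "z \<longlonglongrightarrow> l" using Cauchy_convergent_iff convergent_def by blast
  have "dist l xs \<le> e" if e: "e > 0" for e
  proof -
    obtain N where N: "\<And>n. n \<ge> N \<Longrightarrow> dist (z n) l < e / 2"
      using l e unfolding lim_sequentially by (metis half_gt_zero)
    obtain k where k: "k \<ge> N" "dist (z k) xs < e / 2" using cl[of "e/2" N] e by auto
    show ?thesis using N[OF k(1)] k(2) dist_triangle3[of l xs "z k"] by linarith
  qed
  then have "l = xs" by (metis dist_le_zero_iff field_le_epsilon add_0 order_refl dist_eq_0_iff)
  then have lim: "z \<longlonglongrightarrow> xs" using l by simp
  have "dist (z k) xs \<le> M * real T * \<phi> (r k)" if "k \<ge> K" for k
  proof -
    have "(\<lambda>n. dist (z (n + k)) (z k)) \<longlonglongrightarrow> dist xs (z k)"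
      using LIMSEQ_ignore_initial_segment[OF lim, of k] by (intro tendsto_intros)
    then have "dist xs (z k) \<le> M * real T * \<phi> (r k)"
    proof (rule LIMSEQ_le_const2)
      show "\<exists>N. \<forall>n\<ge>N. dist (z (n + k)) (z k) \<le> M * real T * \<phi> (r k)"
        using dk[OF that] by (metis add.commute)
    qed
    then show ?thesis by (simp add: dist_commute)
  qed
  then show ?thesis using lim by blast
qed


lemma contraction:
  assumes a: "\<alpha> = 1/2" and g: "good k"
  shows "r (k + T) \<le> (1 - c / (real T * C1\<^sup>2 * B\<^sup>2)) * r k"
proof -
  define S where "S = (\<Sum>j<T. \<Delta> (k + j))"
  define Q where "Q = (\<Sum>j<T. (\<Delta> (k + j))\<^sup>2)"
  define dr where "dr = r k - r (k + T)"
  have S0: "S \<ge> 0" unfolding S_def by (intro sum_nonneg \<Delta>0)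
  have cQ: "c * Q \<le> dr" unfolding Q_def dr_def by (rule window_dec)
  have SS: "S\<^sup>2 \<le> real T * Q" unfolding S_def Q_def using window_cs[of k] .
  have "sqrt (r k) \<le> B * D k" using kl[of k] g a r0[of k] unfolding good_def by (simp add: powr_half_sqrt)
  then have "0 \<le> B * D k" using real_sqrt_ge_zero[of "r k"] r0[of k] by linarith
  then have D0: "D k \<ge> 0" using B by (simp add: zero_le_mult_iff)
  have "r k = (sqrt (r k))\<^sup>2" using r0[of k] by simp
  also have "\<dots> \<le> (B * D k)\<^sup>2" using \<open>sqrt (r k) \<le> B * D k\<close> r0[of k] by (intro power_mono) auto
  also have "\<dots> = B\<^sup>2 * (D k)\<^sup>2" by (simp add: power_mult_distrib)
  also have "\<dots> \<le> B\<^sup>2 * (C1 * S)\<^sup>2" using Dle[of k] D0 unfolding S_def by (intro mult_left_mono power_mono) auto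
  also have "\<dots> = B\<^sup>2 * C1\<^sup>2 * S\<^sup>2" by (simp add: power_mult_distrib)
  also have "\<dots> \<le> B\<^sup>2 * C1\<^sup>2 * (real T * Q)" using SS by (intro mult_left_mono) auto
  finally have rk: "r k \<le> B\<^sup>2 * C1\<^sup>2 * real T * Q" by (simp add: algebra_simps)
  have pos: "real T * C1\<^sup>2 * B\<^sup>2 > 0" using T C1 B by simp
  have "c * r k \<le> c * (B\<^sup>2 * C1\<^sup>2 * real T * Q)" using rk c by (intro mult_left_mono) auto
  also have "\<dots> = (real T * C1\<^sup>2 * B\<^sup>2) * (c * Q)" by (simp add: algebra_simps)
  also have "\<dots> \<le> (real T * C1\<^sup>2 * B\<^sup>2) * dr" using cQ pos by (intro mult_left_mono) auto
  finally have "c / (real T * C1\<^sup>2 * B\<^sup>2) * r k \<le> dr" using pos by (simp add: field_simps)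
  then show ?thesis unfolding dr_def by (simp add: algebra_simps)
qed

lemma rate:
  assumes a: "\<alpha> = 1/2"
  shows "\<exists>cc \<rho>. 0 \<le> \<rho> \<and> \<rho> < 1 \<and> (\<forall>k. dist (z k) xs \<le> cc * \<rho> ^ k)"
proof -
  obtain K1 where K1: "\<And>k. k \<ge> K1 \<Longrightarrow> good k" using all_good by blast
  obtain K2 where K2: "\<And>k. k \<ge> K2 \<Longrightarrow> dist (z k) xs \<le> M * real T * \<phi> (r k)" using conv_tail by blast
  define K where "K = max K1 K2"
  define lam where "lam = max (1/2) (1 - c / (real T * C1\<^sup>2 * B\<^sup>2))"
  have pos: "c / (real T * C1\<^sup>2 * B\<^sup>2) > 0" using T C1 B c by simp
  have lam: "0 < lam" "lam < 1" unfolding lam_def using pos by auto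
  have contr: "r (k + T) \<le> lam * r k" if "k \<ge> K" for k
  proof -
    have "r (k + T) \<le> (1 - c / (real T * C1\<^sup>2 * B\<^sup>2)) * r k" using contraction[OF a K1] that K_def by auto
    also have "\<dots> \<le> lam * r k" unfolding lam_def using r0[of k] by (intro mult_right_mono) auto
    finally show ?thesis .
  qed
  have iter: "r (K + T * q) \<le> lam ^ q * r K" for q
  proof (induction q)
    case 0 then show ?case by simp
  next
    case (Suc q)
    have "r (K + T * Suc q) = r ((K + T * q) + T)" by (simp add: algebra_simps)
    also have "\<dots> \<le> lam * r (K + T * q)" by (rule contr) simp
    also have "\<dots> \<le> lam * (lam ^ q * r K)" using Suc lam by (intro mult_left_mono) auto
    finally show ?case by simp
  qed
  have rK: "r (K + n) \<le> lam ^ (n div T) * r K" for n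
  proof -
    have "T * (n div T) \<le> n" by simp
    then have "r (K + n) \<le> r (K + T * (n div T))" by (intro r_mono) simp
    then show ?thesis using iter[of "n div T"] by simp
  qed
  define \<rho> where "\<rho> = lam powr (1 / (2 * real T))"
  have \<rho>: "0 < \<rho>" "\<rho> < 1" unfolding \<rho>_def using lam T powr_less_mono2[of "1/(2*real T)" lam 1] by auto
  have \<rho>T: "\<rho> ^ T = sqrt lam"
  proof -
    have "\<rho> ^ T = \<rho> powr real T" using \<rho> by (simp add: powr_realpow)
    also have "\<dots> = lam powr (1/2)" unfolding \<rho>_def using T by (simp add: powr_powr)
    finally show ?thesis using lam by (simp add: powr_half_sqrt)
  qed
  define A0 where "A0 = M * real T * sqrt (r K) / (\<rho> ^ T * \<rho> ^ K)"
  have A0: "A0 \<ge> 0" unfolding A0_def using M_pos \<rho> r0[of K] by (intro divide_nonneg_pos mult_nonneg_nonneg) auto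
  have h12: "1 - \<alpha> = 1/2" using a by simp
  have main: "dist (z (K + n)) xs \<le> A0 * \<rho> ^ (K + n)" for n
  proof -
    have d1: "dist (z (K + n)) xs \<le> M * real T * \<phi> (r (K + n))" using K2 K_def by simp
    have "\<phi> (r (K + n)) = sqrt (r (K + n))" unfolding \<phi>_def h12 using r0[of "K+n"] by (simp add: powr_half_sqrt)
    also have "sqrt (r (K + n)) \<le> sqrt (lam ^ (n div T) * r K)" using rK by simp
    also have "\<dots> = (sqrt lam) ^ (n div T) * sqrt (r K)" by (simp add: real_sqrt_mult real_sqrt_power)
    also have "(sqrt lam) ^ (n div T) = \<rho> ^ (T * (n div T))" by (simp add: \<rho>T power_mult)
    also have "\<rho> ^ (T * (n div T)) * sqrt (r K) \<le> \<rho> ^ n / \<rho> ^ T * sqrt (r K)"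
    proof (rule mult_right_mono)
      have e1: "n div T * T + n mod T = n" by (rule div_mult_mod_eq)
      have e2: "n mod T < T" using T by simp
      have e3: "T * (n div T) = n div T * T" by simp
      have "n \<le> T * (n div T) + T" using e1 e2 e3 by linarith
      then have "\<rho> ^ (T * (n div T) + T) \<le> \<rho> ^ n" using \<rho> by (intro power_decreasing) auto
      then show "\<rho> ^ (T * (n div T)) \<le> \<rho> ^ n / \<rho> ^ T" using \<rho> by (simp add: power_add field_simps)
    qed (simp add: r0)
    finally have s1: "\<phi> (r (K + n)) \<le> \<rho> ^ n / \<rho> ^ T * sqrt (r K)" .
    have "dist (z (K + n)) xs \<le> M * real T * (\<rho> ^ n / \<rho> ^ T * sqrt (r K))"
      using d1 mult_left_mono[OF s1, of "M * real T"] M_pos by simp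
    also have "\<dots> = A0 * \<rho> ^ (K + n)" unfolding A0_def using \<rho> by (simp add: power_add field_simps)
    finally show ?thesis .
  qed
  define cc where "cc = A0 + (\<Sum>k<K. dist (z k) xs / \<rho> ^ k)"
  have "dist (z k) xs \<le> cc * \<rho> ^ k" for k
  proof (cases "k \<ge> K")
    case True
    have "dist (z k) xs \<le> A0 * \<rho> ^ k" using main[of "k - K"] True by simp
    also have "\<dots> \<le> cc * \<rho> ^ k" unfolding cc_def using \<rho>
      by (intro mult_right_mono) (auto intro!: sum_nonneg)
    finally show ?thesis .
  next
    case False
    have "dist (z k) xs / \<rho> ^ k \<le> (\<Sum>k<K. dist (z k) xs / \<rho> ^ k)"
      using False \<rho> by (intro member_le_sum) auto
    then have "dist (z k) xs / \<rho> ^ k \<le> cc" unfolding cc_def using A0 by linarith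
    then show ?thesis using \<rho> by (simp add: field_simps)
  qed
  then show ?thesis using \<rho> by (intro exI[of _ cc] exI[of _ \<rho>]) auto
qed

end

fun xh_seq :: "(nat \<Rightarrow> 'a^'N) \<Rightarrow> (nat \<Rightarrow> 'N set) \<Rightarrow> 'a^'N \<Rightarrow> nat \<Rightarrow> 'a^'N" where
  "xh_seq Zf I x0 0 = x0"
| "xh_seq Zf I x0 (Suc k) = (\<chi> i. if i \<in> I (Suc k) then Zf k $ i else xh_seq Zf I x0 k $ i)"

lemma norm_vec_sq: "(norm (x :: 'a::real_normed_vector^'N))\<^sup>2 = (\<Sum>i\<in>UNIV. (norm (x $ i))\<^sup>2)"
  unfolding norm_vec_def L2_set_def by (simp add: sum_nonneg)

lemma norm_vec_l1: "norm (x :: 'a::real_normed_vector^'N) \<le> (\<Sum>i\<in>UNIV. norm (x $ i))"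
  unfolding norm_vec_def by (rule L2_set_le_sum) simp

locale sharing =
  fixes f :: "'N::finite \<Rightarrow> real^'n::finite \<Rightarrow> real"
    and gf :: "'N \<Rightarrow> real^'n \<Rightarrow> real^'n"
    and L :: "'N \<Rightarrow> real"
    and g :: "real^'n \<Rightarrow> ereal"
    and \<theta> :: real
    and \<gamma> :: "'N \<Rightarrow> real"
    and xinit :: "real^'n^'N"
    and I :: "nat \<Rightarrow> 'N set"
  assumes g_proper: "proper_fun g" and g_convex: "ereal_convex g" and g_lsc: "lsc_fun g"
    and f_grad: "\<And>i x. (f i has_derivative (\<lambda>h. inner (gf i x) h)) (at x)"
    and L_pos: "\<And>i. L i > 0"
    and f_lip: "\<And>i x y. norm (gf i x - gf i y) \<le> L i * norm (x - y)"
    and coercive: "\<And>M::real. \<exists>R. \<forall>x. norm x \<ge> R \<longrightarrow> sharing_obj f g x \<ge> ereal M"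
    and theta: "0 < \<theta>" "\<theta> < 1"
    and KL: "KL_exponent (sharing_obj f g) \<theta>"
    and gamma: "\<And>i. 0 < \<gamma> i \<and> \<gamma> i < real CARD('N) / L i"
    and cyclic: "essentially_cyclic I"
begin

definition "gt = (\<Sum>i\<in>UNIV. \<gamma> i)"
definition "S k = fst (sharing_state gf g \<gamma> xinit I k)"
definition "ST k = snd (sharing_state gf g \<gamma> xinit I k)"
definition "U k = prox gt g (ST k)"
definition "W k = sharing_w g gt (ST k)"
definition "Z k = sharing_z gf g \<gamma> xinit I k"
definition "XH k = xh_seq Z I xinit k"
definition "Tg i x = x - (\<gamma> i / real CARD('N)) *\<^sub>R gf i x"

lemma gam_pos: "\<gamma> i > 0" using gamma by blast
lemma gt_pos: "gt > 0" unfolding gt_def using gam_pos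
  by (simp add: sum_pos)
lemma gam_le_gt: "\<gamma> i \<le> gt" unfolding gt_def
  using gam_pos by (intro member_le_sum) (auto intro: less_imp_le)

lemma W_def2: "W k = (1 / gt) *\<^sub>R (U k - ST k)"
  unfolding W_def U_def sharing_w_def ..

lemma Z_def2: "Z k = (\<chi> i. S k $ i + \<gamma> i *\<^sub>R W k)"
  unfolding Z_def sharing_z_def S_def ST_def W_def gt_def by (simp add: case_prod_beta)

lemma state_Suc_x: "sharing_state gf g \<gamma> xinit I (Suc k) =
   ((\<chi> i. if i \<in> I (Suc k) then Tg i (Z k $ i) else S k $ i),
    ST k + (\<Sum>i\<in>I (Suc k). Tg i (Z k $ i) - S k $ i))"
  unfolding S_def ST_def Tg_def Z_def2 W_def gt_def by (simp add: case_prod_beta Let_def vec_eq_iff ST_def)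

lemma S_Suc: "S (Suc k) = (\<chi> i. if i \<in> I (Suc k) then Tg i (Z k $ i) else S k $ i)"
  using state_Suc_x unfolding S_def by simp

lemma ST_Suc: "ST (Suc k) = ST k + (\<Sum>i\<in>I (Suc k). Tg i (Z k $ i) - S k $ i)"
  using state_Suc_x unfolding ST_def by (simp only: snd_conv)

lemma ST_sum: "ST k = (\<Sum>i\<in>UNIV. S k $ i)"
proof (induction k)
  case 0 then show ?case unfolding ST_def S_def by (simp add: Let_def)
next
  case (Suc k)
  have "(\<Sum>i\<in>UNIV. S (Suc k) $ i) = (\<Sum>i\<in>UNIV. S k $ i + (if i \<in> I (Suc k) then Tg i (Z k $ i) - S k $ i else 0))"
    unfolding S_Suc by (intro sum.cong) auto
  also have "\<dots> = (\<Sum>i\<in>UNIV. S k $ i) + (\<Sum>i\<in>I (Suc k). Tg i (Z k $ i) - S k $ i)"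
    by (simp add: sum.distrib sum.If_cases)
  finally show ?case using Suc by (simp add: ST_Suc)
qed

lemma XH_0: "XH 0 = xinit" unfolding XH_def by simp
lemma XH_Suc: "XH (Suc k) = (\<chi> i. if i \<in> I (Suc k) then Z k $ i else XH k $ i)"
  unfolding XH_def by simp

lemma S_XH: "S k $ i = Tg i (XH k $ i)"
proof (induction k)
  case 0 then show ?case unfolding S_def XH_0 Tg_def by (simp add: Let_def)
next
  case (Suc k) then show ?case unfolding S_Suc XH_Suc by simp
qed

lemma Z_sum: "(\<Sum>i\<in>UNIV. Z k $ i) = U k"
proof -
  have "(\<Sum>i\<in>UNIV. Z k $ i) = (\<Sum>i\<in>UNIV. S k $ i) + (\<Sum>i\<in>UNIV. \<gamma> i *\<^sub>R W k)"
    unfolding Z_def2 by (simp add: sum.distrib)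
  also have "\<dots> = ST k + gt *\<^sub>R W k" unfolding ST_sum gt_def by (simp add: scaleR_sum_left)
  also have "\<dots> = U k" unfolding W_def2 using gt_pos by simp
  finally show ?thesis .
qed

lemma Z_XH: "Z k $ i - XH k $ i = \<gamma> i *\<^sub>R W k - (\<gamma> i / real CARD('N)) *\<^sub>R gf i (XH k $ i)"
  unfolding Z_def2 using S_XH[of k i] unfolding Tg_def by simp

definition "G k = real_of_ereal (g (U k))"

lemma prox_U: "g (U k) = ereal (G k) \<and> (\<forall>v. ereal (G k - inner (W k) (v - U k)) \<le> g v)"
proof -
  obtain P where P: "g (U k) = ereal P" "\<forall>v. ereal (P + inner ((1/gt) *\<^sub>R (ST k - U k)) (v - U k)) \<le> g v"
    using prox_subgrad[OF g_proper g_convex g_lsc gt_pos, of "ST k"] unfolding U_def by blast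
  have "inner ((1/gt) *\<^sub>R (ST k - U k)) y = - inner (W k) y" for y
    unfolding W_def2 by (simp add: inner_diff_left) (metis minus_diff_eq minus_divide_left)
  then show ?thesis using P unfolding G_def by simp
qed

lemma gU: "g (U k) = ereal (G k)" using prox_U by blast
lemma g_sub: "ereal (G k - inner (W k) (v - U k)) \<le> g v" using prox_U by blast

end

lemma norm_add_sq:
  fixes a b :: "'a::real_inner"
  shows "(norm (a + b))\<^sup>2 = (norm a)\<^sup>2 + 2 * inner a b + (norm b)\<^sup>2"
  using norm_add_scale_sq[of a 1 b] by simp

context sharing begin

definition "m i k y = (1 / real CARD('N)) * (f i (XH k $ i) + inner (gf i (XH k $ i)) (y - XH k $ i))
   + (norm (y - XH k $ i))\<^sup>2 / (2 * \<gamma> i)"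
definition "V k = (\<Sum>i\<in>UNIV. m i k (Z k $ i)) + G k"
definition "a i = 1 / (2 * \<gamma> i) - L i / (2 * real CARD('N))"
definition "bu i = 1 / (2 * \<gamma> i) + L i / (2 * real CARD('N))"

lemma a_pos: "a i > 0"
proof -
  have "\<gamma> i * L i < real CARD('N)" using gamma[of i] L_pos[of i] by (simp add: field_simps)
  then have "L i / (2 * real CARD('N)) < 1 / (2 * \<gamma> i)" using gam_pos[of i] L_pos[of i]
    by (simp add: field_simps)
  then show ?thesis unfolding a_def by simp
qed

lemma m_diff: "m i k y - m i k (Z k $ i) = inner (W k) (y - Z k $ i) + (norm (y - Z k $ i))\<^sup>2 / (2 * \<gamma> i)"
proof -
  define x where "x = XH k $ i"
  define z where "z = Z k $ i"
  define p where "p = gf i x"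
  define n where "n = real CARD('N)"
  have n: "n > 0" unfolding n_def by simp
  have gi: "\<gamma> i > 0" by (rule gam_pos)
  have zx: "z - x = \<gamma> i *\<^sub>R W k - (\<gamma> i / n) *\<^sub>R p" unfolding z_def x_def p_def n_def by (rule Z_XH)
  have e: "(norm (y - x))\<^sup>2 = (norm (y - z))\<^sup>2 + 2 * inner (y - z) (z - x) + (norm (z - x))\<^sup>2"
    using norm_add_sq[of "y - z" "z - x"] by simp
  have ip: "inner (y - z) (z - x) = \<gamma> i * inner (y - z) (W k) - (\<gamma> i / n) * inner (y - z) p"
    unfolding zx by (simp add: inner_diff_right)
  have "m i k y - m i k z = (1/n) * inner p (y - z) + ((norm (y - x))\<^sup>2 - (norm (z - x))\<^sup>2) / (2 * \<gamma> i)"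
    unfolding m_def x_def[symmetric] p_def[symmetric] n_def[symmetric]
    by (simp add: inner_diff_right diff_divide_distrib algebra_simps)
  also have "\<dots> = (1/n) * inner p (y - z) + ((norm (y - z))\<^sup>2 + 2 * (\<gamma> i * inner (y - z) (W k) - (\<gamma> i / n) * inner (y - z) p)) / (2 * \<gamma> i)"
    unfolding e ip by simp
  also have "\<dots> = inner (W k) (y - z) + (norm (y - z))\<^sup>2 / (2 * \<gamma> i)"
    using gi n by (simp add: field_simps inner_commute)
  finally show ?thesis unfolding z_def .
qed

lemma model:
  assumes "g (\<Sum>i\<in>UNIV. x $ i) = ereal Gx"
  shows "V k + (\<Sum>i\<in>UNIV. (norm (x $ i - Z k $ i))\<^sup>2 / (2 * \<gamma> i)) \<le> (\<Sum>i\<in>UNIV. m i k (x $ i)) + Gx"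
proof -
  have "(\<Sum>i\<in>UNIV. m i k (x $ i)) = (\<Sum>i\<in>UNIV. m i k (Z k $ i) + inner (W k) (x $ i - Z k $ i)
        + (norm (x $ i - Z k $ i))\<^sup>2 / (2 * \<gamma> i))"
    using m_diff by (intro sum.cong) (auto simp: algebra_simps)
  also have "\<dots> = (\<Sum>i\<in>UNIV. m i k (Z k $ i)) + inner (W k) ((\<Sum>i\<in>UNIV. x $ i) - U k)
        + (\<Sum>i\<in>UNIV. (norm (x $ i - Z k $ i))\<^sup>2 / (2 * \<gamma> i))"
    by (simp add: sum.distrib inner_sum_right[symmetric] sum_subtractf Z_sum)
  finally have e: "(\<Sum>i\<in>UNIV. m i k (x $ i)) = (\<Sum>i\<in>UNIV. m i k (Z k $ i)) + inner (W k) ((\<Sum>i\<in>UNIV. x $ i) - U k)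
        + (\<Sum>i\<in>UNIV. (norm (x $ i - Z k $ i))\<^sup>2 / (2 * \<gamma> i))" .
  have "G k - inner (W k) ((\<Sum>i\<in>UNIV. x $ i) - U k) \<le> Gx"
    using g_sub[of k "\<Sum>i\<in>UNIV. x $ i"] assms by simp
  then show ?thesis unfolding V_def e by simp
qed

lemma m_Suc: "m i (Suc k) (Z k $ i) = (if i \<in> I (Suc k) then f i (Z k $ i) / real CARD('N) else m i k (Z k $ i))"
  unfolding m_def XH_Suc by simp

lemma e_bounds:
  shows "a i * (norm (Z k $ i - XH k $ i))\<^sup>2 \<le> m i k (Z k $ i) - f i (Z k $ i) / real CARD('N)"
    and "m i k (Z k $ i) - f i (Z k $ i) / real CARD('N) \<le> bu i * (norm (Z k $ i - XH k $ i))\<^sup>2"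
proof -
  define x where "x = XH k $ i"
  define z where "z = Z k $ i"
  define n where "n = real CARD('N)"
  have n: "n > 0" unfolding n_def by simp
  have dl: "\<bar>f i z - f i x - inner (gf i x) (z - x)\<bar> \<le> L i / 2 * (norm (z - x))\<^sup>2"
    using descent_lemma[OF f_grad f_lip] .
  have e: "m i k z - f i z / n = (f i x + inner (gf i x) (z - x) - f i z) / n + (norm (z - x))\<^sup>2 / (2 * \<gamma> i)"
    unfolding m_def x_def[symmetric] n_def[symmetric] using n by (simp add: field_simps)
  have d1: "f i z - f i x - inner (gf i x) (z - x) \<le> L i / 2 * (norm (z - x))\<^sup>2"
    and d2: "- (f i z - f i x - inner (gf i x) (z - x)) \<le> L i / 2 * (norm (z - x))\<^sup>2"
    using dl unfolding abs_le_iff by auto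
  have "- (L i / 2 * (norm (z - x))\<^sup>2) \<le> f i x + inner (gf i x) (z - x) - f i z" using d1 by linarith
  then have l1: "- (L i / 2 * (norm (z - x))\<^sup>2) / n \<le> (f i x + inner (gf i x) (z - x) - f i z) / n"
    using n by (intro divide_right_mono) auto
  have "f i x + inner (gf i x) (z - x) - f i z \<le> L i / 2 * (norm (z - x))\<^sup>2" using d2 by linarith
  then have l2: "(f i x + inner (gf i x) (z - x) - f i z) / n \<le> (L i / 2 * (norm (z - x))\<^sup>2) / n"
    using n by (intro divide_right_mono) auto
  show "a i * (norm (Z k $ i - XH k $ i))\<^sup>2 \<le> m i k (Z k $ i) - f i (Z k $ i) / real CARD('N)"
    using l1 unfolding z_def[symmetric] x_def[symmetric] n_def[symmetric] e a_def
    by (simp add: field_simps)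
  show "m i k (Z k $ i) - f i (Z k $ i) / real CARD('N) \<le> bu i * (norm (Z k $ i - XH k $ i))\<^sup>2"
    using l2 unfolding z_def[symmetric] x_def[symmetric] n_def[symmetric] e bu_def
    by (simp add: field_simps)
qed

lemma descent:
  "V (Suc k) + (\<Sum>i\<in>UNIV. (norm (Z (Suc k) $ i - Z k $ i))\<^sup>2 / (2 * \<gamma> i))
    + (\<Sum>i\<in>UNIV. a i * (norm (XH (Suc k) $ i - XH k $ i))\<^sup>2) \<le> V k"
proof -
  have "V (Suc k) + (\<Sum>i\<in>UNIV. (norm (Z k $ i - Z (Suc k) $ i))\<^sup>2 / (2 * \<gamma> i))
      \<le> (\<Sum>i\<in>UNIV. m i (Suc k) (Z k $ i)) + G k"
    by (rule model) (simp add: Z_sum gU)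
  moreover have "m i (Suc k) (Z k $ i) + a i * (norm (XH (Suc k) $ i - XH k $ i))\<^sup>2 \<le> m i k (Z k $ i)" for i
  proof (cases "i \<in> I (Suc k)")
    case True
    then show ?thesis using e_bounds(1)[of i k] unfolding m_Suc XH_Suc by simp
  next
    case False
    then show ?thesis unfolding m_Suc XH_Suc by simp
  qed
  then have "(\<Sum>i\<in>UNIV. m i (Suc k) (Z k $ i)) + (\<Sum>i\<in>UNIV. a i * (norm (XH (Suc k) $ i - XH k $ i))\<^sup>2)
      \<le> (\<Sum>i\<in>UNIV. m i k (Z k $ i))"
    by (simp add: sum.distrib[symmetric] sum_mono)
  ultimately show ?thesis unfolding V_def by (simp add: norm_minus_commute)
qed

end

lemma quad_reg:
  fixes \<Phi> :: "'a::real_inner \<Rightarrow> ereal"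
  assumes p: "\<Phi> x0 = ereal p" and q: "\<And>x. ereal (p + inner v (x - x0) - C * (norm (x - x0))\<^sup>2) \<le> \<Phi> x"
    and C: "C \<ge> 0"
  shows "v \<in> reg_subdiff \<Phi> x0"
  unfolding reg_subdiff_def
proof (intro CollectI conjI allI impI)
  show "\<bar>\<Phi> x0\<bar> \<noteq> \<infinity>" using p by simp
  fix \<epsilon> :: real assume e: "\<epsilon> > 0"
  show "\<exists>\<delta>>0. \<forall>y. norm (y - x0) < \<delta> \<longrightarrow> \<Phi> x0 + ereal (inner v (y - x0) - \<epsilon> * norm (y - x0)) \<le> \<Phi> y"
  proof (intro exI conjI allI impI)
    show "\<epsilon> / (C + 1) > 0" using e C by simp
    fix y assume y: "norm (y - x0) < \<epsilon> / (C + 1)"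
    define d where "d = norm (y - x0)"
    have "C * d\<^sup>2 = (C * d) * d" by (simp add: power2_eq_square)
    also have "\<dots> \<le> (C * (\<epsilon> / (C + 1))) * d" using y C unfolding d_def
      by (intro mult_right_mono mult_left_mono) auto
    also have "\<dots> \<le> \<epsilon> * d" using C e unfolding d_def by (intro mult_right_mono) (auto simp: field_simps)
    finally have "p + inner v (y - x0) - \<epsilon> * d \<le> p + inner v (y - x0) - C * d\<^sup>2" by simp
    then have "ereal (p + inner v (y - x0) - \<epsilon> * d) \<le> \<Phi> y" using q[of y] unfolding d_def
      by (meson ereal_less_eq(3) order_trans)
    then show "\<Phi> x0 + ereal (inner v (y - x0) - \<epsilon> * norm (y - x0)) \<le> \<Phi> y" unfolding p d_def by (simp add: add_diff_eq)
  qed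
qed

lemma reg_lim: "v \<in> reg_subdiff \<Phi> x \<Longrightarrow> v \<in> lim_subdiff \<Phi> x"
  unfolding lim_subdiff_def
  by (rule CollectI, rule conjI, simp add: reg_subdiff_def, rule exI[of _ "\<lambda>k. x"], rule exI[of _ "\<lambda>k. v"]) auto

context sharing begin

definition "Ph k = (1 / real CARD('N)) * (\<Sum>i\<in>UNIV. f i (Z k $ i)) + G k"
definition "Cu = (\<Sum>i\<in>UNIV. bu i)"
definition "Cq = (\<Sum>i\<in>UNIV. L i / (2 * real CARD('N)))"
definition "Cv = (\<Sum>i\<in>UNIV. L i / real CARD('N) + 1 / \<gamma> i)"
definition "vs k = (\<chi> i. (1 / real CARD('N)) *\<^sub>R gf i (Z k $ i) - W k)"

lemma Phi_Z: "sharing_obj f g (Z k) = ereal (Ph k)"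
  unfolding sharing_obj_def Ph_def Z_sum gU by simp

lemma bu_nonneg: "bu i \<ge> 0" unfolding bu_def using gam_pos[of i] L_pos[of i] by simp

lemma V_Ph: "0 \<le> V k - Ph k" "V k - Ph k \<le> Cu * (norm (Z k - XH k))\<^sup>2"
proof -
  have e: "V k - Ph k = (\<Sum>i\<in>UNIV. m i k (Z k $ i) - f i (Z k $ i) / real CARD('N))"
    unfolding V_def Ph_def by (simp add: sum_subtractf sum_divide_distrib)
  have "0 \<le> a i * (norm (Z k $ i - XH k $ i))\<^sup>2" for i using a_pos[of i] by simp
  then show "0 \<le> V k - Ph k" unfolding e using e_bounds(1) by (intro sum_nonneg) (meson order_trans)
  have "V k - Ph k \<le> (\<Sum>i\<in>UNIV. bu i * (norm (Z k - XH k))\<^sup>2)"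
    unfolding e
  proof (intro sum_mono)
    fix i
    have "(norm (Z k $ i - XH k $ i))\<^sup>2 \<le> (norm (Z k - XH k))\<^sup>2"
      using Finite_Cartesian_Product.norm_nth_le[where x="Z k - XH k" and i=i] by (intro power_mono) auto
    then have "bu i * (norm (Z k $ i - XH k $ i))\<^sup>2 \<le> bu i * (norm (Z k - XH k))\<^sup>2"
      using bu_nonneg by (intro mult_left_mono) auto
    then show "m i k (Z k $ i) - f i (Z k $ i) / real CARD('N) \<le> bu i * (norm (Z k - XH k))\<^sup>2"
      using e_bounds(2)[of i k] by linarith
  qed
  then show "V k - Ph k \<le> Cu * (norm (Z k - XH k))\<^sup>2" unfolding Cu_def by (simp add: sum_distrib_right)
qed

lemma Cq_nonneg: "Cq \<ge> 0" unfolding Cq_def using L_pos by (intro sum_nonneg) (auto intro: less_imp_le)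

lemma global_ineq:
  "ereal (Ph k + inner (vs k) (x - Z k) - Cq * (norm (x - Z k))\<^sup>2) \<le> sharing_obj f g x"
proof (cases "g (\<Sum>i\<in>UNIV. x $ i)")
  case (real Gx)
  define n where "n = real CARD('N)"
  have n: "n > 0" unfolding n_def by simp
  have fl: "f i (Z k $ i) + inner (gf i (Z k $ i)) (x $ i - Z k $ i) - L i / 2 * (norm (x $ i - Z k $ i))\<^sup>2 \<le> f i (x $ i)" for i
    using descent_lemma[OF f_grad[of i] f_lip[of i], where x="Z k $ i" and y="x $ i"] unfolding abs_le_iff by linarith
  have gl: "G k - inner (W k) ((\<Sum>i\<in>UNIV. x $ i) - U k) \<le> Gx"
    using g_sub[of k "\<Sum>i\<in>UNIV. x $ i"] real by simp
  have iv0: "inner (vs k) (x - Z k) = (\<Sum>i\<in>UNIV. inner (vs k $ i) (x $ i - Z k $ i))"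
    by (subst inner_vec_def) simp
  have iv1: "(\<Sum>i\<in>UNIV. inner (W k) (x $ i - Z k $ i)) = inner (W k) ((\<Sum>i\<in>UNIV. x $ i) - U k)"
    by (simp add: inner_sum_right[symmetric] sum_subtractf Z_sum)
  have iv: "inner (vs k) (x - Z k) = (1 / n) * (\<Sum>i\<in>UNIV. inner (gf i (Z k $ i)) (x $ i - Z k $ i))
      - inner (W k) ((\<Sum>i\<in>UNIV. x $ i) - U k)"
    unfolding iv0 iv1[symmetric] unfolding vs_def n_def
    by (simp add: inner_diff_left sum_subtractf sum_distrib_left)
  have qs: "(\<Sum>i\<in>UNIV. L i / 2 * (norm (x $ i - Z k $ i))\<^sup>2) \<le> (\<Sum>i\<in>UNIV. L i / 2 * (norm (x - Z k))\<^sup>2)"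
  proof (intro sum_mono)
    fix i
    have "(norm (x $ i - Z k $ i))\<^sup>2 \<le> (norm (x - Z k))\<^sup>2"
      using Finite_Cartesian_Product.norm_nth_le[where x="x - Z k" and i=i] by (intro power_mono) auto
    then show "L i / 2 * (norm (x $ i - Z k $ i))\<^sup>2 \<le> L i / 2 * (norm (x - Z k))\<^sup>2"
      using L_pos[of i] by (intro mult_left_mono) auto
  qed
  have "(\<Sum>i\<in>UNIV. f i (Z k $ i) + inner (gf i (Z k $ i)) (x $ i - Z k $ i) - L i / 2 * (norm (x $ i - Z k $ i))\<^sup>2)
        \<le> (\<Sum>i\<in>UNIV. f i (x $ i))" using fl by (intro sum_mono) auto
  then have s1: "(\<Sum>i\<in>UNIV. f i (Z k $ i)) + (\<Sum>i\<in>UNIV. inner (gf i (Z k $ i)) (x $ i - Z k $ i))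
       - (\<Sum>i\<in>UNIV. L i / 2 * (norm (x - Z k))\<^sup>2) \<le> (\<Sum>i\<in>UNIV. f i (x $ i))"
    using qs by (simp add: sum.distrib sum_subtractf)
  have "Cq * (norm (x - Z k))\<^sup>2 = (1 / n) * (\<Sum>i\<in>UNIV. L i / 2 * (norm (x - Z k))\<^sup>2)"
    unfolding Cq_def n_def by (simp add: sum_distrib_left sum_distrib_right field_simps)
  then have "Ph k + inner (vs k) (x - Z k) - Cq * (norm (x - Z k))\<^sup>2
      = (1 / n) * ((\<Sum>i\<in>UNIV. f i (Z k $ i)) + (\<Sum>i\<in>UNIV. inner (gf i (Z k $ i)) (x $ i - Z k $ i))
       - (\<Sum>i\<in>UNIV. L i / 2 * (norm (x - Z k))\<^sup>2)) + (G k - inner (W k) ((\<Sum>i\<in>UNIV. x $ i) - U k))"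
    unfolding Ph_def iv n_def[symmetric] by (simp add: algebra_simps)
  also have "\<dots> \<le> (1 / n) * (\<Sum>i\<in>UNIV. f i (x $ i)) + Gx"
    using s1 gl n by (intro add_mono mult_left_mono) auto
  finally show ?thesis unfolding sharing_obj_def real n_def by simp
next
  case PInf then show ?thesis unfolding sharing_obj_def by simp
next
  case MInf then show ?thesis using g_proper unfolding proper_fun_def by simp
qed

lemma vs_reg: "vs k \<in> reg_subdiff (sharing_obj f g) (Z k)"
  by (rule quad_reg[OF Phi_Z global_ineq Cq_nonneg])

lemma vs_norm: "norm (vs k) \<le> Cv * norm (Z k - XH k)"
proof -
  define n where "n = real CARD('N)"
  have n: "n > 0" unfolding n_def by simp
  have vi: "vs k $ i = (1 / n) *\<^sub>R (gf i (Z k $ i) - gf i (XH k $ i)) - (1 / \<gamma> i) *\<^sub>R (Z k $ i - XH k $ i)" for i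
  proof -
    have "(1 / \<gamma> i) *\<^sub>R (Z k $ i - XH k $ i) = W k - (1 / n) *\<^sub>R gf i (XH k $ i)"
      unfolding Z_XH n_def using gam_pos[of i] by (simp add: scaleR_diff_right)
    then show ?thesis unfolding vs_def n_def by (simp add: scaleR_diff_right algebra_simps)
  qed
  have "norm (vs k) \<le> (\<Sum>i\<in>UNIV. norm (vs k $ i))" by (rule norm_vec_l1)
  also have "\<dots> \<le> (\<Sum>i\<in>UNIV. (L i / real CARD('N) + 1 / \<gamma> i) * norm (Z k - XH k))"
  proof (intro sum_mono)
    fix i
    have "norm (vs k $ i) \<le> (1 / n) * norm (gf i (Z k $ i) - gf i (XH k $ i)) + (1 / \<gamma> i) * norm (Z k $ i - XH k $ i)"
      unfolding vi using n gam_pos[of i] by (metis (no_types, lifting) norm_triangle_ineq4 norm_scaleR abs_of_pos divide_pos_pos zero_less_one)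
    also have "\<dots> \<le> (1 / n) * (L i * norm (Z k $ i - XH k $ i)) + (1 / \<gamma> i) * norm (Z k $ i - XH k $ i)"
      using f_lip n gam_pos[of i] by (intro add_mono mult_left_mono) auto
    also have "\<dots> = (L i / n + 1 / \<gamma> i) * norm (Z k $ i - XH k $ i)" by (simp add: algebra_simps)
    also have "\<dots> \<le> (L i / n + 1 / \<gamma> i) * norm (Z k - XH k)"
      using Finite_Cartesian_Product.norm_nth_le[where x="Z k - XH k" and i=i] L_pos[of i] gam_pos[of i] n by (intro mult_left_mono) auto
    finally show "norm (vs k $ i) \<le> (L i / real CARD('N) + 1 / \<gamma> i) * norm (Z k - XH k)" unfolding n_def .
  qed
  also have "\<dots> = Cv * norm (Z k - XH k)" unfolding Cv_def by (simp add: sum_distrib_right)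
  finally show ?thesis .
qed

end

context sharing begin

definition "Dl k = norm (Z (Suc k) - Z k) + norm (XH (Suc k) - XH k)"
definition "Dk k = norm (Z k - XH k)"
definition "amin = Min (range a)"
definition "c0 = min (1 / (2 * gt)) amin"
definition "Tc = (SOME T::nat. T \<ge> 1 \<and> (\<forall>k i. \<exists>t\<in>{1..T}. i \<in> I (k + t)))"

lemma amin_pos: "amin > 0" unfolding amin_def using a_pos by simp
lemma a_ge: "amin \<le> a i" unfolding amin_def by simp
lemma c0_pos: "c0 > 0" unfolding c0_def using amin_pos gt_pos by simp

lemma Tc: "Tc \<ge> 1" "\<And>k i. \<exists>t\<in>{1..Tc}. i \<in> I (k + t)"
proof -
  have "\<exists>T::nat. T \<ge> 1 \<and> (\<forall>k i. \<exists>t\<in>{1..T}. i \<in> I (k + t))" using cyclic unfolding essentially_cyclic_def .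
  from someI_ex[OF this] show "Tc \<ge> 1" "\<And>k i. \<exists>t\<in>{1..Tc}. i \<in> I (k + t)" unfolding Tc_def by blast+
qed

lemma descent2: "c0 / 2 * (Dl k)\<^sup>2 \<le> V k - V (Suc k)"
proof -
  define A where "A = (\<Sum>i\<in>UNIV. (norm (Z (Suc k) $ i - Z k $ i))\<^sup>2 / (2 * \<gamma> i))"
  define Bx where "Bx = (\<Sum>i\<in>UNIV. a i * (norm (XH (Suc k) $ i - XH k $ i))\<^sup>2)"
  define p where "p = norm (Z (Suc k) - Z k)"
  define q where "q = norm (XH (Suc k) - XH k)"
  have d: "V (Suc k) + A + Bx \<le> V k" unfolding A_def Bx_def by (rule descent)
  have "(1 / (2 * gt)) * p\<^sup>2 = (\<Sum>i\<in>UNIV. (norm (Z (Suc k) $ i - Z k $ i))\<^sup>2 / (2 * gt))"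
    unfolding p_def norm_vec_sq by (simp add: sum_divide_distrib)
  also have "\<dots> \<le> A" unfolding A_def
    using gam_pos gam_le_gt gt_pos by (intro sum_mono divide_left_mono) auto
  finally have pA: "(1 / (2 * gt)) * p\<^sup>2 \<le> A" .
  have "amin * q\<^sup>2 = (\<Sum>i\<in>UNIV. amin * (norm (XH (Suc k) $ i - XH k $ i))\<^sup>2)"
    unfolding q_def norm_vec_sq by (simp add: sum_distrib_left)
  also have "\<dots> \<le> Bx" unfolding Bx_def using a_ge by (intro sum_mono mult_right_mono) auto
  finally have qB: "amin * q\<^sup>2 \<le> Bx" .
  have "c0 * p\<^sup>2 \<le> (1 / (2 * gt)) * p\<^sup>2" unfolding c0_def by (intro mult_right_mono) auto
  moreover have "c0 * q\<^sup>2 \<le> amin * q\<^sup>2" unfolding c0_def by (intro mult_right_mono) auto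
  moreover have "(p + q)\<^sup>2 \<le> 2 * (p\<^sup>2 + q\<^sup>2)" using sum_squares_bound[of p q] by (simp add: power2_sum)
  then have "c0 / 2 * (p + q)\<^sup>2 \<le> c0 / 2 * (2 * (p\<^sup>2 + q\<^sup>2))" using c0_pos by (intro mult_left_mono) auto
  ultimately have "c0 / 2 * (p + q)\<^sup>2 \<le> A + Bx" using pA qB by (simp add: algebra_simps)
  then show ?thesis using d unfolding Dl_def p_def q_def by simp
qed

lemma V_dec: "V (Suc k) \<le> V k"
  using descent2[of k] c0_pos by (smt (verit) mult_nonneg_nonneg zero_le_power2 divide_nonneg_pos)

lemma V_mono: "k \<le> j \<Longrightarrow> V j \<le> V k"
  by (rule lift_Suc_antimono_le[of V]) (use V_dec in auto)

lemma Dl_nonneg: "Dl k \<ge> 0" unfolding Dl_def by simp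

lemma D_bound: "Dk k \<le> real CARD('N) * (\<Sum>j<Tc. Dl (k + j))"
proof -
  have comp: "norm (Z k $ i - XH k $ i) \<le> (\<Sum>j<Tc. Dl (k + j))" for i
  proof -
    obtain t where t: "t \<in> {1..Tc}" "i \<in> I (k + t)" using Tc(2) by blast
    define t' where "t' = t - 1"
    have tt: "k + t = Suc (k + t')" unfolding t'_def using t by simp
    have xh: "XH (k + t) $ i = Z (k + t') $ i" unfolding tt XH_Suc using t tt by simp
    have "Z k $ i - XH k $ i = (Z k $ i - Z (k + t') $ i) + (XH (k + t) $ i - XH k $ i)" using xh by simp
    then have "norm (Z k $ i - XH k $ i) \<le> norm (Z k $ i - Z (k + t') $ i) + norm (XH (k + t) $ i - XH k $ i)"
      by (metis norm_triangle_ineq)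
    also have "\<dots> \<le> norm (Z (k + t') - Z k) + norm (XH (k + t) - XH k)"
      using Finite_Cartesian_Product.norm_nth_le[where x="Z (k + t') - Z k" and i=i]
        Finite_Cartesian_Product.norm_nth_le[where x="XH (k + t) - XH k" and i=i]
      by (simp add: norm_minus_commute)
    also have "\<dots> \<le> (\<Sum>j<t'. norm (Z (Suc (k + j)) - Z (k + j))) + (\<Sum>j<t. norm (XH (Suc (k + j)) - XH (k + j)))"
      using dist_chain[of Z "\<lambda>j. norm (Z (Suc j) - Z j)" k t']
        dist_chain[of XH "\<lambda>j. norm (XH (Suc j) - XH j)" k t]
      by (intro add_mono) (auto simp: dist_norm)
    also have "\<dots> \<le> (\<Sum>j<t. norm (Z (Suc (k + j)) - Z (k + j))) + (\<Sum>j<t. norm (XH (Suc (k + j)) - XH (k + j)))"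
      unfolding t'_def by (intro add_mono sum_mono2) auto
    also have "\<dots> = (\<Sum>j<t. Dl (k + j))" unfolding Dl_def by (simp add: sum.distrib)
    also have "\<dots> \<le> (\<Sum>j<Tc. Dl (k + j))" using t by (intro sum_mono2) (auto intro: Dl_nonneg)
    finally show ?thesis .
  qed
  have "Dk k \<le> (\<Sum>i\<in>UNIV. norm ((Z k - XH k) $ i))" unfolding Dk_def by (rule norm_vec_l1)
  also have "\<dots> \<le> (\<Sum>i\<in>(UNIV::'N set). (\<Sum>j<Tc. Dl (k + j)))" using comp by (intro sum_mono) simp
  also have "\<dots> = real CARD('N) * (\<Sum>j<Tc. Dl (k + j))" by simp
  finally show ?thesis .
qed

end

context sharing begin

lemma f_isCont: "isCont (f i) x"
  using has_derivative_continuous[OF f_grad[of i x]] .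

lemma f_cont: "continuous_on A (f i)"
  by (rule continuous_at_imp_continuous_on) (simp add: f_isCont)

lemma Ph_le_V: "Ph k \<le> V k" using V_Ph(1)[of k] by simp

lemma Z_bounded: "\<exists>R. \<forall>k. norm (Z k) < R"
proof -
  obtain R where R: "\<And>x. norm x \<ge> R \<Longrightarrow> sharing_obj f g x \<ge> ereal (V 0 + 1)" using coercive by blast
  have "norm (Z k) < R" for k
  proof (rule ccontr)
    assume "\<not> norm (Z k) < R"
    then have "ereal (Ph k) \<ge> ereal (V 0 + 1)" using R[of "Z k"] Phi_Z by simp
    then have "Ph k \<ge> V 0 + 1" by simp
    moreover have "Ph k \<le> V 0" using Ph_le_V[of k] V_mono[of 0 k] by simp
    ultimately show False by simp
  qed
  then show ?thesis by blast
qed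

lemma V_lower: "\<exists>lb. \<forall>k. lb \<le> V k"
proof -
  obtain R where R: "\<And>k. norm (Z k) < R" using Z_bounded by blast
  have R0: "R > 0" using R[of 0] norm_ge_zero[of "Z 0"] by linarith
  have "\<forall>i. \<exists>x\<in>cball (0::real^'n) R. \<forall>y\<in>cball 0 R. f i x \<le> f i y"
    using R0 by (intro allI continuous_attains_inf f_cont) auto
  then obtain xm where xm: "\<And>i y. y \<in> cball 0 R \<Longrightarrow> f i (xm i) \<le> f i y" by metis
  obtain A B where AB: "B \<ge> 0" "\<And>u. ereal (A - B * norm u) \<le> g u" using g_lower[OF g_proper g_convex g_lsc] by blast
  define lb where "lb = (1 / real CARD('N)) * (\<Sum>i\<in>UNIV. f i (xm i)) + (A - B * (real CARD('N) * R))"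
  have "lb \<le> Ph k" for k
  proof -
    have zi: "norm (Z k $ i) \<le> R" for i
      using Finite_Cartesian_Product.norm_nth_le[where x="Z k" and i=i] R[of k] by simp
    have "(\<Sum>i\<in>UNIV. f i (xm i)) \<le> (\<Sum>i\<in>UNIV. f i (Z k $ i))"
      using xm zi by (intro sum_mono) auto
    then have s1: "(1 / real CARD('N)) * (\<Sum>i\<in>UNIV. f i (xm i)) \<le> (1 / real CARD('N)) * (\<Sum>i\<in>UNIV. f i (Z k $ i))"
      by (intro mult_left_mono) auto
    have "norm (U k) \<le> (\<Sum>i\<in>UNIV. norm (Z k $ i))" unfolding Z_sum[symmetric] by (rule norm_sum)
    also have "\<dots> \<le> (\<Sum>i\<in>(UNIV::'N set). R)" using zi by (intro sum_mono) auto
    finally have "norm (U k) \<le> real CARD('N) * R" by simp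
    then have "A - B * (real CARD('N) * R) \<le> A - B * norm (U k)" using AB(1) by (simp add: mult_left_mono)
    also have "\<dots> \<le> G k" using AB(2)[of "U k"] gU[of k] by simp
    finally show ?thesis unfolding lb_def Ph_def using s1 by simp
  qed
  then show ?thesis using Ph_le_V by (meson order_trans)
qed

definition "Vs = lim V"

lemma V_lim: "V \<longlonglongrightarrow> Vs" and Vs_le: "Vs \<le> V k"
proof -
  obtain lb where lb: "\<And>k. lb \<le> V k" using V_lower by blast
  have dec: "decseq V" unfolding decseq_def using V_mono by blast
  obtain Lm where Lm: "V \<longlonglongrightarrow> Lm" "\<forall>i. Lm \<le> V i" using decseq_convergent[OF dec, of lb] lb by blast
  then have "Vs = Lm" unfolding Vs_def by (simp add: limI)
  then show "V \<longlonglongrightarrow> Vs" "Vs \<le> V k" using Lm by auto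
qed

lemma Dl_lim: "Dl \<longlonglongrightarrow> 0"
proof -
  have "(\<lambda>k. V k - V (Suc k)) \<longlonglongrightarrow> Vs - Vs"
    using V_lim LIMSEQ_Suc[OF V_lim] by (intro tendsto_diff)
  then have "(\<lambda>k. V k - V (Suc k)) \<longlonglongrightarrow> 0" by simp
  then have l: "(\<lambda>k. (2 / c0) * (V k - V (Suc k))) \<longlonglongrightarrow> 0" by (rule tendsto_mult_right_zero)
  have "(\<lambda>k. (Dl k)\<^sup>2) \<longlonglongrightarrow> 0"
  proof (rule tendsto_sandwich[OF _ _ tendsto_const l])
    show "\<forall>\<^sub>F n in sequentially. 0 \<le> (Dl n)\<^sup>2" by simp
    show "\<forall>\<^sub>F n in sequentially. (Dl n)\<^sup>2 \<le> 2 / c0 * (V n - V (Suc n))"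
      using descent2 c0_pos by (auto simp: field_simps)
  qed
  then have "(\<lambda>k. sqrt ((Dl k)\<^sup>2)) \<longlonglongrightarrow> sqrt 0" by (rule tendsto_real_sqrt)
  then show ?thesis using Dl_nonneg by simp
qed

lemma Dk_lim: "Dk \<longlonglongrightarrow> 0"
proof -
  have "(\<lambda>k. Dl (k + j)) \<longlonglongrightarrow> 0" for j using LIMSEQ_ignore_initial_segment[OF Dl_lim, of j] .
  then have "(\<lambda>k. \<Sum>j<Tc. Dl (k + j)) \<longlonglongrightarrow> (\<Sum>j<Tc. 0)" by (intro tendsto_sum) auto
  then have "(\<lambda>k. \<Sum>j<Tc. Dl (k + j)) \<longlonglongrightarrow> 0" by simp
  then have l: "(\<lambda>k. real CARD('N) * (\<Sum>j<Tc. Dl (k + j))) \<longlonglongrightarrow> 0" by (rule tendsto_mult_right_zero)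
  show ?thesis
  proof (rule tendsto_sandwich[OF _ _ tendsto_const l])
    show "\<forall>\<^sub>F n in sequentially. 0 \<le> Dk n" unfolding Dk_def by simp
    show "\<forall>\<^sub>F n in sequentially. Dk n \<le> real CARD('N) * (\<Sum>j<Tc. Dl (n + j))" using D_bound by simp
  qed
qed

lemma Ph_lim: "Ph \<longlonglongrightarrow> Vs"
proof -
  have "(\<lambda>k. (Dk k)\<^sup>2) \<longlonglongrightarrow> 0" using tendsto_power[OF Dk_lim, of 2] by simp
  then have l: "(\<lambda>k. Cu * (Dk k)\<^sup>2) \<longlonglongrightarrow> 0" by (rule tendsto_mult_right_zero)
  have "(\<lambda>k. V k - Ph k) \<longlonglongrightarrow> 0"
  proof (rule tendsto_sandwich[OF _ _ tendsto_const l])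
    show "\<forall>\<^sub>F n in sequentially. 0 \<le> V n - Ph n" using V_Ph(1) by simp
    show "\<forall>\<^sub>F n in sequentially. V n - Ph n \<le> Cu * (Dk n)\<^sup>2" using V_Ph(2) unfolding Dk_def by simp
  qed
  from tendsto_diff[OF V_lim this] show ?thesis by simp
qed

end

lemma lsc_lim:
  assumes lsc: "lsc_fun g" and X: "X \<longlonglongrightarrow> x" and gy: "\<And>k. g (X k) = ereal (y k)" and y: "y \<longlonglongrightarrow> y0"
  shows "g x \<le> ereal y0"
proof -
  have gl: "g x \<le> ereal (y0 + \<delta>)" if \<delta>: "\<delta> > 0" for \<delta>
  proof (rule lsc_le[OF lsc X])
    have "eventually (\<lambda>k. y k < y0 + \<delta>) sequentially" using y \<delta> by (intro order_tendstoD) auto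
    then show "\<forall>\<^sub>F k in sequentially. g (X k) \<le> ereal (y0 + \<delta>)"
      by (rule eventually_mono) (simp add: gy)
  qed
  show ?thesis
  proof (cases "g x")
    case (real a)
    have "a \<le> y0 + \<delta>" if "\<delta> > 0" for \<delta> using gl[OF that] real by simp
    then have "a \<le> y0" by (meson field_le_epsilon)
    then show ?thesis using real by simp
  next
    case PInf then show ?thesis using gl[of 1] by simp
  qed simp
qed

lemma ereal_lim_lower:
  assumes "\<And>j. ereal (a j) \<le> e" "a \<longlonglongrightarrow> a0"
  shows "ereal a0 \<le> e"
proof (cases e)
  case (real b)
  have "a0 \<le> b" using assms real by (intro LIMSEQ_le_const2[OF assms(2)]) auto
  then show ?thesis using real by simp
next
  case MInf then show ?thesis using assms(1)[of 0] by simp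
qed simp

context sharing begin

definition "Fz x = (1 / real CARD('N)) * (\<Sum>i\<in>UNIV. f i (x $ i))"
definition "\<alpha>e = max \<theta> (1/2)"
definition "Bk \<rho> = 2 * (Cu powr \<alpha>e + \<rho> * (1 - \<theta>) * Cv) + 1"

lemma Ph_F: "Ph k = Fz (Z k) + G k" unfolding Ph_def Fz_def ..

lemma Fz_lim: assumes X: "X \<longlonglongrightarrow> x" shows "(\<lambda>j. Fz (X j)) \<longlonglongrightarrow> Fz x"
proof -
  have "(\<lambda>j. f i (X j $ i)) \<longlonglongrightarrow> f i (x $ i)" for i
    by (rule isCont_tendsto_compose[OF f_isCont tendsto_vec_nth[OF X]])
  then have "(\<lambda>j. \<Sum>i\<in>UNIV. f i (X j $ i)) \<longlonglongrightarrow> (\<Sum>i\<in>UNIV. f i (x $ i))" by (rule tendsto_sum)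
  then show ?thesis unfolding Fz_def by (rule tendsto_mult_left)
qed

lemma \<alpha>e: "0 < \<alpha>e" "\<alpha>e < 1" "\<theta> \<le> \<alpha>e" "1 \<le> 2 * \<alpha>e" unfolding \<alpha>e_def using theta by auto

lemma Cu_nonneg: "Cu \<ge> 0" unfolding Cu_def using bu_nonneg by (simp add: sum_nonneg)
lemma Cv_nonneg: "Cv \<ge> 0" unfolding Cv_def using L_pos gam_pos
  by (intro sum_nonneg add_nonneg_nonneg) (auto intro: less_imp_le)

lemma p_bound:
  assumes D1: "Dk k \<le> 1"
  shows "(V k - Ph k) powr \<alpha>e \<le> Cu powr \<alpha>e * Dk k"
proof -
  define D where "D = Dk k"
  have D0: "D \<ge> 0" unfolding D_def Dk_def by simp
  have "(V k - Ph k) powr \<alpha>e \<le> (Cu * D\<^sup>2) powr \<alpha>e"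
    using V_Ph[of k] \<alpha>e unfolding D_def Dk_def by (intro powr_mono2) auto
  also have "\<dots> = Cu powr \<alpha>e * (D\<^sup>2) powr \<alpha>e" using Cu_nonneg by (simp add: powr_mult)
  also have "(D\<^sup>2) powr \<alpha>e \<le> D"
  proof (cases "D = 0")
    case True then show ?thesis by simp
  next
    case False
    then have Dp: "D > 0" using D0 by simp
    have "D\<^sup>2 = D powr 2" using Dp powr_realpow[of D 2] by simp
    then have "(D\<^sup>2) powr \<alpha>e = D powr (2 * \<alpha>e)" by (simp only: powr_powr)
    also have "\<dots> \<le> D powr 1" using Dp D1 \<alpha>e unfolding D_def[symmetric] by (intro powr_mono') auto
    finally show ?thesis using Dp by simp
  qed
  then have "Cu powr \<alpha>e * (D\<^sup>2) powr \<alpha>e \<le> Cu powr \<alpha>e * D" by (intro mult_left_mono) auto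
  finally show ?thesis unfolding D_def .
qed

lemma kl_cond:
  assumes \<Phi>xs: "sharing_obj f g xs = ereal Vs"
    and KLloc: "\<And>w. norm (w - xs) < \<epsilon> \<and> sharing_obj f g xs < sharing_obj f g w
        \<and> sharing_obj f g w < sharing_obj f g xs + ereal \<eta> \<and> lim_subdiff (sharing_obj f g) w \<noteq> {}
        \<Longrightarrow> \<rho> * (1 - \<theta>) * (real_of_ereal (sharing_obj f g w - sharing_obj f g xs)) powr (- \<theta>)
              * infdist 0 (lim_subdiff (sharing_obj f g) w) \<ge> 1"
    and \<rho>: "\<rho> > 0" and D1: "Dk k \<le> 1" and Phk: "Ph k < Vs + min \<eta> 1" and dk: "dist (Z k) xs < \<epsilon>"
  shows "(V k - Vs) powr \<alpha>e \<le> Bk \<rho> * Dk k"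
proof -
  define p where "p = V k - Ph k"
  define q where "q = Ph k - Vs"
  define D where "D = Dk k"
  have D0: "D \<ge> 0" unfolding D_def Dk_def by simp
  have p0: "p \<ge> 0" unfolding p_def using V_Ph(1) by simp
  have pa: "p powr \<alpha>e \<le> Cu powr \<alpha>e * D" unfolding p_def D_def using p_bound[OF D1] .
  have r: "V k - Vs = p + q" unfolding p_def q_def by simp
  have Bk1: "Cu powr \<alpha>e * D \<le> Bk \<rho> * D"
    unfolding Bk_def using D0 \<rho> theta Cv_nonneg
    by (intro mult_right_mono) (auto intro!: add_nonneg_nonneg mult_nonneg_nonneg)
  show ?thesis
  proof (cases "q \<le> 0")
    case True
    have "(V k - Vs) powr \<alpha>e \<le> p powr \<alpha>e" unfolding r using True Vs_le[of k] r \<alpha>e by (intro powr_mono2) auto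
    then show ?thesis using pa Bk1 unfolding D_def by linarith
  next
    case False
    then have q0: "q > 0" by simp
    have q1: "q < 1" "q < \<eta>" using Phk unfolding q_def by auto
    have vin: "vs k \<in> lim_subdiff (sharing_obj f g) (Z k)" using reg_lim[OF vs_reg] .
    have "1 \<le> \<rho> * (1 - \<theta>) * (real_of_ereal (sharing_obj f g (Z k) - sharing_obj f g xs)) powr (- \<theta>)
              * infdist 0 (lim_subdiff (sharing_obj f g) (Z k))"
    proof (rule KLloc)
      have "ereal Vs < ereal (Ph k)" using q0 unfolding q_def by simp
      moreover have "ereal (Ph k) < ereal Vs + ereal \<eta>" using q1 unfolding q_def by simp
      moreover have "norm (Z k - xs) < \<epsilon>" using dk by (simp add: dist_norm)
      moreover have "lim_subdiff (sharing_obj f g) (Z k) \<noteq> {}" using vin by blast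
      ultimately show "norm (Z k - xs) < \<epsilon> \<and> sharing_obj f g xs < sharing_obj f g (Z k)
        \<and> sharing_obj f g (Z k) < sharing_obj f g xs + ereal \<eta> \<and> lim_subdiff (sharing_obj f g) (Z k) \<noteq> {}"
        unfolding \<Phi>xs Phi_Z by simp
    qed
    also have "real_of_ereal (sharing_obj f g (Z k) - sharing_obj f g xs) = q" unfolding \<Phi>xs Phi_Z q_def by simp
    also have "infdist 0 (lim_subdiff (sharing_obj f g) (Z k)) \<le> Cv * D"
    proof -
      have "infdist 0 (lim_subdiff (sharing_obj f g) (Z k)) \<le> dist 0 (vs k)" using infdist_le[OF vin] .
      also have "\<dots> \<le> Cv * D" unfolding D_def Dk_def using vs_norm by simp
      finally show ?thesis .
    qed
    then have "\<rho> * (1 - \<theta>) * q powr (- \<theta>) * infdist 0 (lim_subdiff (sharing_obj f g) (Z k))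
        \<le> \<rho> * (1 - \<theta>) * q powr (- \<theta>) * (Cv * D)"
      using \<rho> theta by (intro mult_left_mono) auto
    finally have one: "1 \<le> \<rho> * (1 - \<theta>) * q powr (- \<theta>) * (Cv * D)" .
    have "q powr \<theta> = q powr \<theta> * 1" by simp
    also have "\<dots> \<le> q powr \<theta> * (\<rho> * (1 - \<theta>) * q powr (- \<theta>) * (Cv * D))" using one by (intro mult_left_mono) auto
    also have "\<dots> = (q powr \<theta> * q powr (- \<theta>)) * (\<rho> * (1 - \<theta>) * Cv * D)" by (simp add: algebra_simps)
    also have "q powr \<theta> * q powr (- \<theta>) = 1" using q0 by (simp add: powr_add[symmetric])
    finally have qt: "q powr \<theta> \<le> \<rho> * (1 - \<theta>) * Cv * D" by simp
    have qa: "q powr \<alpha>e \<le> q powr \<theta>" using q0 q1 \<alpha>e by (intro powr_mono') auto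
    define mx where "mx = max p q"
    have mx0: "mx \<ge> 0" unfolding mx_def using p0 by simp
    have "(V k - Vs) powr \<alpha>e \<le> (2 * mx) powr \<alpha>e" unfolding r mx_def using p0 q0 \<alpha>e by (intro powr_mono2) auto
    also have "\<dots> = 2 powr \<alpha>e * mx powr \<alpha>e" using mx0 by (simp add: powr_mult)
    also have "\<dots> \<le> 2 * (p powr \<alpha>e + q powr \<alpha>e)"
    proof (rule mult_mono)
      show "2 powr \<alpha>e \<le> 2" using \<alpha>e powr_mono[of \<alpha>e 1 2] by simp
      show "mx powr \<alpha>e \<le> p powr \<alpha>e + q powr \<alpha>e" unfolding mx_def by (cases "p \<le> q") (auto simp: max_def)
    qed auto
    also have "\<dots> \<le> 2 * (Cu powr \<alpha>e * D + \<rho> * (1 - \<theta>) * Cv * D)" using pa qt qa by simp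
    also have "\<dots> \<le> Bk \<rho> * D" unfolding Bk_def using D0 by (simp add: algebra_simps)
    finally show ?thesis unfolding D_def .
  qed
qed

end

context sharing begin

lemma main: "\<exists>xs. Z \<longlonglongrightarrow> xs \<and> 0 \<in> reg_subdiff (sharing_obj f g) xs \<and>
   (\<theta> \<le> 1/2 \<longrightarrow> (\<exists>c \<rho>. 0 \<le> \<rho> \<and> \<rho> < 1 \<and> (\<forall>k. norm (Z k - xs) \<le> c * \<rho> ^ k)))"
proof -
  obtain R where R: "\<And>k. norm (Z k) < R" using Z_bounded by blast
  have inR: "\<forall>k. Z k \<in> cball 0 R" using R by (simp add: less_imp_le)
  obtain xs \<phi> where xs: "xs \<in> cball 0 R" "strict_mono \<phi>" "(Z \<circ> \<phi>) \<longlonglongrightarrow> xs"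
    using seq_compactE[OF compact_imp_seq_compact[OF compact_cball] inR] by metis
  have Z\<phi>: "(\<lambda>j. Z (\<phi> j)) \<longlonglongrightarrow> xs" using xs(3) by (simp add: o_def)
  have Ph\<phi>: "(\<lambda>j. Ph (\<phi> j)) \<longlonglongrightarrow> Vs" using LIMSEQ_subseq_LIMSEQ[OF Ph_lim xs(2)] by (simp add: o_def)
  have Dk\<phi>: "(\<lambda>j. Dk (\<phi> j)) \<longlonglongrightarrow> 0" using LIMSEQ_subseq_LIMSEQ[OF Dk_lim xs(2)] by (simp add: o_def)
  have "(\<lambda>j. norm (vs (\<phi> j))) \<longlonglongrightarrow> 0"
  proof (rule tendsto_sandwich[OF _ _ tendsto_const])
    show "\<forall>\<^sub>F n in sequentially. 0 \<le> norm (vs (\<phi> n))" by simp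
    show "\<forall>\<^sub>F n in sequentially. norm (vs (\<phi> n)) \<le> Cv * Dk (\<phi> n)" using vs_norm unfolding Dk_def by simp
    show "(\<lambda>n. Cv * Dk (\<phi> n)) \<longlonglongrightarrow> 0" using tendsto_mult_right_zero[OF Dk\<phi>] .
  qed
  then have vs\<phi>: "(\<lambda>j. vs (\<phi> j)) \<longlonglongrightarrow> 0" by (rule tendsto_norm_zero_cancel)
  have LB: "ereal (Vs - Cq * (norm (x - xs))\<^sup>2) \<le> sharing_obj f g x" for x
  proof (rule ereal_lim_lower)
    show "ereal (Ph (\<phi> j) + inner (vs (\<phi> j)) (x - Z (\<phi> j)) - Cq * (norm (x - Z (\<phi> j)))\<^sup>2) \<le> sharing_obj f g x" for j
      by (rule global_ineq)
    have "(\<lambda>j. Ph (\<phi> j) + inner (vs (\<phi> j)) (x - Z (\<phi> j)) - Cq * (norm (x - Z (\<phi> j)))\<^sup>2)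
        \<longlonglongrightarrow> Vs + inner 0 (x - xs) - Cq * (norm (x - xs))\<^sup>2"
      by (intro tendsto_diff[OF tendsto_add[OF Ph\<phi> tendsto_inner[OF vs\<phi> tendsto_diff[OF tendsto_const Z\<phi>]]]
          tendsto_mult[OF tendsto_const tendsto_power[OF tendsto_norm[OF tendsto_diff[OF tendsto_const Z\<phi>]]]]])
    then show "(\<lambda>j. Ph (\<phi> j) + inner (vs (\<phi> j)) (x - Z (\<phi> j)) - Cq * (norm (x - Z (\<phi> j)))\<^sup>2)
        \<longlonglongrightarrow> Vs - Cq * (norm (x - xs))\<^sup>2" by simp
  qed
  have G\<phi>: "(\<lambda>j. G (\<phi> j)) \<longlonglongrightarrow> Vs - Fz xs"
    using tendsto_diff[OF Ph\<phi> Fz_lim[OF Z\<phi>]] by (simp add: Ph_F)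
  have "(\<lambda>j. \<Sum>i\<in>UNIV. Z (\<phi> j) $ i) \<longlonglongrightarrow> (\<Sum>i\<in>UNIV. xs $ i)"
    by (intro tendsto_sum tendsto_vec_nth Z\<phi>)
  then have U\<phi>: "(\<lambda>j. U (\<phi> j)) \<longlonglongrightarrow> (\<Sum>i\<in>UNIV. xs $ i)" by (simp add: Z_sum)
  have gxs: "g (\<Sum>i\<in>UNIV. xs $ i) \<le> ereal (Vs - Fz xs)"
    by (rule lsc_lim[OF g_lsc U\<phi> gU G\<phi>])
  have "sharing_obj f g xs = ereal (Fz xs) + g (\<Sum>i\<in>UNIV. xs $ i)" unfolding sharing_obj_def Fz_def ..
  also have "\<dots> \<le> ereal (Fz xs) + ereal (Vs - Fz xs)" using gxs by (rule add_left_mono)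
  finally have "sharing_obj f g xs \<le> ereal Vs" by simp
  then have \<Phi>xs: "sharing_obj f g xs = ereal Vs" using LB[of xs] by simp
  have zero: "0 \<in> reg_subdiff (sharing_obj f g) xs"
    using quad_reg[of "sharing_obj f g" xs Vs 0 Cq] \<Phi>xs LB Cq_nonneg by simp
  have ne: "lim_subdiff (sharing_obj f g) xs \<noteq> {}" using reg_lim[OF zero] by blast
  obtain \<epsilon> \<eta> \<rho> where e: "\<epsilon> > 0" "\<eta> > 0" "\<rho> > 0" and KLloc: "\<And>w. norm (w - xs) < \<epsilon> \<and> sharing_obj f g xs < sharing_obj f g w
        \<and> sharing_obj f g w < sharing_obj f g xs + ereal \<eta> \<and> lim_subdiff (sharing_obj f g) w \<noteq> {}
        \<Longrightarrow> \<rho> * (1 - \<theta>) * (real_of_ereal (sharing_obj f g w - sharing_obj f g xs)) powr (- \<theta>)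
              * infdist 0 (lim_subdiff (sharing_obj f g) w) \<ge> 1"
  proof -
    have "\<exists>\<epsilon>>0. \<exists>\<eta>>0. \<exists>\<rho>>0. \<forall>w.
        norm (w - xs) < \<epsilon> \<and> sharing_obj f g xs < sharing_obj f g w \<and> sharing_obj f g w < sharing_obj f g xs + ereal \<eta>
        \<and> lim_subdiff (sharing_obj f g) w \<noteq> {}
        \<longrightarrow> \<rho> * (1 - \<theta>) * (real_of_ereal (sharing_obj f g w - sharing_obj f g xs)) powr (- \<theta>)
              * infdist 0 (lim_subdiff (sharing_obj f g) w) \<ge> 1"
      using KL ne unfolding KL_exponent_def by blast
    then show ?thesis using that by blast
  qed
  have ev1: "eventually (\<lambda>k. Dk k < 1) sequentially" using Dk_lim by (intro order_tendstoD) auto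
  have ev2: "eventually (\<lambda>k. Ph k < Vs + min \<eta> 1) sequentially" using Ph_lim e by (intro order_tendstoD) auto
  obtain K0 where K0: "\<And>k. k \<ge> K0 \<Longrightarrow> Dk k < 1 \<and> Ph k < Vs + min \<eta> 1"
    using eventually_conj[OF ev1 ev2] unfolding eventually_sequentially by blast
  have f1: "0 \<le> \<rho> * (1 - \<theta>) * Cv" using e theta Cv_nonneg by simp
  have f2: "0 \<le> Cu powr \<alpha>e" by simp
  have Bk_pos: "Bk \<rho> > 0" unfolding Bk_def
    by (rule add_nonneg_pos[OF mult_nonneg_nonneg[OF _ add_nonneg_nonneg[OF f2 f1]]]) simp_all
  interpret K: kl_seq Z xs "\<lambda>k. V k - Vs" Dl Dk "c0/2" "real CARD('N)" "Bk \<rho>" \<alpha>e \<epsilon> Tc K0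
  proof
    show "0 \<le> V k - Vs" for k using Vs_le[of k] by simp
    show "(\<lambda>k. V k - Vs) \<longlonglongrightarrow> 0" using tendsto_diff[OF V_lim tendsto_const[of Vs]] by simp
    show "c0 / 2 * (Dl k)\<^sup>2 \<le> V k - Vs - (V (Suc k) - Vs)" for k using descent2[of k] by simp
    show "c0 / 2 > 0" using c0_pos by simp
    show "0 \<le> Dl k" for k by (rule Dl_nonneg)
    show "dist (Z (Suc k)) (Z k) \<le> Dl k" for k unfolding Dl_def dist_norm by simp
    show "Dk k \<le> real CARD('N) * (\<Sum>j<Tc. Dl (k + j))" for k by (rule D_bound)
    show "Tc \<ge> 1" by (rule Tc(1))
    show "real CARD('N) > 0" by simp
    show "\<exists>k\<ge>K. dist (Z k) xs < \<delta>" if d: "\<delta> > 0" for K \<delta>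
    proof -
      obtain no where no: "\<And>n. n \<ge> no \<Longrightarrow> dist (Z (\<phi> n)) xs < \<delta>"
        using Z\<phi> d unfolding lim_sequentially by blast
      have "\<phi> (max no K) \<ge> K" using seq_suble[OF xs(2), of "max no K"] by simp
      then show ?thesis using no[of "max no K"] by auto
    qed
    show "0 < \<alpha>e" "\<alpha>e < 1" using \<alpha>e by auto
    show "\<epsilon> > 0" by (rule e)
    show "Bk \<rho> > 0" by (rule Bk_pos)
    show "(V k - Vs) powr \<alpha>e \<le> Bk \<rho> * Dk k" if "k \<ge> K0" "dist (Z k) xs < \<epsilon>" for k
    proof (rule kl_cond[where xs=xs and \<epsilon>=\<epsilon> and \<eta>=\<eta> and \<rho>=\<rho> and k=k, OF \<Phi>xs KLloc e(3)])
      show "Dk k \<le> 1" using K0[OF that(1)] by simp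
      show "Ph k < Vs + min \<eta> 1" using K0[OF that(1)] by simp
      show "dist (Z k) xs < \<epsilon>" by (rule that(2))
    qed
  qed
  have lim: "Z \<longlonglongrightarrow> xs" using K.conv_tail by blast
  have rate: "\<theta> \<le> 1/2 \<longrightarrow> (\<exists>c \<rho>. 0 \<le> \<rho> \<and> \<rho> < 1 \<and> (\<forall>k. norm (Z k - xs) \<le> c * \<rho> ^ k))"
  proof
    assume "\<theta> \<le> 1/2"
    then have "\<alpha>e = 1/2" unfolding \<alpha>e_def by simp
    then show "\<exists>c \<rho>. 0 \<le> \<rho> \<and> \<rho> < 1 \<and> (\<forall>k. norm (Z k - xs) \<le> c * \<rho> ^ k)"
      using K.rate by (simp add: dist_norm)
  qed
  show ?thesis using lim zero rate by blast
qed

end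

theorem corollary4p3:
  fixes f :: "'N::finite \<Rightarrow> real^'n::finite \<Rightarrow> real"
    and gf :: "'N \<Rightarrow> real^'n \<Rightarrow> real^'n"
    and L :: "'N \<Rightarrow> real"
    and g :: "real^'n \<Rightarrow> ereal"
    and \<theta> :: real
    and \<gamma> :: "'N \<Rightarrow> real"
    and xinit :: "real^'n^'N"
    and I :: "nat \<Rightarrow> 'N set"
  assumes g_proper: "proper_fun g" and g_convex: "ereal_convex g" and g_lsc: "lsc_fun g"
    and f_grad: "\<And>i x. (f i has_derivative (\<lambda>h. inner (gf i x) h)) (at x)"
    and L_pos: "\<And>i. L i > 0"
    and f_lip: "\<And>i x y. norm (gf i x - gf i y) \<le> L i * norm (x - y)"
    and coercive: "\<And>M::real. \<exists>R. \<forall>x. norm x \<ge> R \<longrightarrow> sharing_obj f g x \<ge> ereal M"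
    and theta: "0 < \<theta>" "\<theta> < 1"
    and KL: "KL_exponent (sharing_obj f g) \<theta>"
    and gamma: "\<And>i. 0 < \<gamma> i \<and> \<gamma> i < real CARD('N) / L i"
    and cyclic: "essentially_cyclic I"
  shows "\<exists>xs. sharing_z gf g \<gamma> xinit I \<longlonglongrightarrow> xs
            \<and> 0 \<in> reg_subdiff (sharing_obj f g) xs
            \<and> (\<theta> \<le> 1/2 \<longrightarrow> (\<exists>c \<rho>. 0 \<le> \<rho> \<and> \<rho> < 1 \<and>
                  (\<forall>k. norm (sharing_z gf g \<gamma> xinit I k - xs) \<le> c * \<rho> ^ k)))"
proof -
  interpret sharing f gf L g \<theta> \<gamma> xinit I
    using assms by (unfold_locales) auto
  have "Z = sharing_z gf g \<gamma> xinit I" by (rule ext) (simp add: Z_def)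
  then show ?thesis using main by simp
qed

end
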